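(* Let $(M^{2n},J,g)$ be an almost Hermitian manifold, $X$ a unit real tangent vector, $\xi=\frac1{\sqrt2}(X-\sqrt{-1}JX)$, and $e_1=\xi,e_2,\dots,e_n$ a unitary $(1,0)$-frame. Then $R_{1\bar11\bar1}-\sum_{i=2}^n|\tau_{i1}^1+\tau_{i1}^{\bar1}|^2=R^L(X,JX,JX,X)-\|(\nabla_XJ)X\|^2.$
   Context: Almost Hermitian manifold: real dimension $2n$, almost complex structure $J$, Riemannian metric $g$ with $g(JX,JY)=g(X,Y)$. Operations extended complex-linearly; $\langle\cdot,\cdot\rangle$ the complex-bilinear extension of $g$; unitary frame: $\langle e_i,\bar e_j\rangle=\delta_{ij}$. $\nabla$ is the Levi-Civita connection; $D$ is the Chern connection, the unique connection with $DJ=0$, $Dg=0$ whose torsion $\tau(X,Y)=D_XY-D_YX-[X,Y]$ satisfies $\tau(\zeta,\bar\eta)=0$ for all $(1,0)$-vectors $\zeta,\eta$; $\tau(e_i,e_j)=\tau_{ij}^ke_k+\tau_{ij}^{\bar k}\bar e_k$. Curvatures: for a connection $\mathcal D$, $R(X,Y)=\mathcal D_X\mathcal D_Y-\mathcal D_Y\mathcal D_X-\mathcal D_{[X,Y]}$ and $R(X,Y,Z,W)=\langle R(X,Y)Z,W\rangle$; $R^L$ is this for $\nabla$ and $R$ for $D$, so $R^L(X,Y,Y,X)$ is the sectional curvature of orthonormal $X,Y$ and $R_{1\bar11\bar1}=R(e_1,\bar e_1,e_1,\bar e_1)$. *)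

theory Defs
  imports "HOL-Analysis.Analysis"
begin

text \<open>Local (chart) model: the manifold is an open set U of the Euclidean space real^'m.
  Vector fields are maps real^'m => real^'m; tensors are given pointwise.\<close>

fun dder :: "('a::real_normed_vector \<Rightarrow> 'b::real_normed_vector) \<Rightarrow> 'a list \<Rightarrow> 'a \<Rightarrow> 'b" where
  "dder f [] = f"
| "dder f (v # vs) = (\<lambda>p. frechet_derivative (dder f vs) (at p) v)"

definition smooth_on_set :: "'a set \<Rightarrow> ('a::real_normed_vector \<Rightarrow> 'b::real_normed_vector) \<Rightarrow> bool" where
  "smooth_on_set U f \<longleftrightarrow> (\<forall>vs. \<forall>p\<in>U. dder f vs differentiable (at p))"

text \<open>A connection is given by its Christoffel map Gamma: D_X Y = dY(X) + Gamma(X,Y).\<close>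
definition cov :: "('a::real_normed_vector \<Rightarrow> 'a \<Rightarrow> 'a \<Rightarrow> 'a) \<Rightarrow> ('a \<Rightarrow> 'a) \<Rightarrow> ('a \<Rightarrow> 'a) \<Rightarrow> 'a \<Rightarrow> 'a" where
  "cov \<Gamma> X Y = (\<lambda>p. frechet_derivative Y (at p) (X p) + \<Gamma> p (X p) (Y p))"

definition lie :: "('a::real_normed_vector \<Rightarrow> 'a) \<Rightarrow> ('a \<Rightarrow> 'a) \<Rightarrow> 'a \<Rightarrow> 'a" where
  "lie X Y = (\<lambda>p. frechet_derivative Y (at p) (X p) - frechet_derivative X (at p) (Y p))"

definition torsion :: "('a::real_normed_vector \<Rightarrow> 'a \<Rightarrow> 'a \<Rightarrow> 'a) \<Rightarrow> ('a \<Rightarrow> 'a) \<Rightarrow> ('a \<Rightarrow> 'a) \<Rightarrow> 'a \<Rightarrow> 'a" where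
  "torsion \<Gamma> X Y = (\<lambda>p. cov \<Gamma> X Y p - cov \<Gamma> Y X p - lie X Y p)"

definition curv :: "('a::real_normed_vector \<Rightarrow> 'a \<Rightarrow> 'a \<Rightarrow> 'a) \<Rightarrow> ('a \<Rightarrow> 'a) \<Rightarrow> ('a \<Rightarrow> 'a) \<Rightarrow> ('a \<Rightarrow> 'a) \<Rightarrow> 'a \<Rightarrow> 'a" where
  "curv \<Gamma> X Y Z = (\<lambda>p. cov \<Gamma> X (cov \<Gamma> Y Z) p - cov \<Gamma> Y (cov \<Gamma> X Z) p - cov \<Gamma> (lie X Y) Z p)"

text \<open>Tensors at a point, evaluated on vectors via (constant) extensions to vector fields.\<close>
definition tors_at :: "('a::real_normed_vector \<Rightarrow> 'a \<Rightarrow> 'a \<Rightarrow> 'a) \<Rightarrow> 'a \<Rightarrow> 'a \<Rightarrow> 'a \<Rightarrow> 'a" where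
  "tors_at \<Gamma> p u v = torsion \<Gamma> (\<lambda>_. u) (\<lambda>_. v) p"

definition curv4_at :: "('a \<Rightarrow> 'a \<Rightarrow> 'a \<Rightarrow> real) \<Rightarrow> ('a::real_normed_vector \<Rightarrow> 'a \<Rightarrow> 'a \<Rightarrow> 'a) \<Rightarrow> 'a \<Rightarrow> 'a \<Rightarrow> 'a \<Rightarrow> 'a \<Rightarrow> 'a \<Rightarrow> real" where
  "curv4_at g \<Gamma> p x y z w = g p (curv \<Gamma> (\<lambda>_. x) (\<lambda>_. y) (\<lambda>_. z) p) w"

definition cpl :: "real^'n \<Rightarrow> real^'n \<Rightarrow> complex^'n" where
  "cpl a b = (\<chi> i. Complex (a$i) (b$i))"
definition cre :: "complex^'n \<Rightarrow> real^'n" where "cre z = (\<chi> i. Re (z$i))"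
definition cim :: "complex^'n \<Rightarrow> real^'n" where "cim z = (\<chi> i. Im (z$i))"
definition cconj :: "complex^'n \<Rightarrow> complex^'n" where "cconj z = (\<chi> i. cnj (z$i))"

text \<open>Complex-linear extensions of real linear / bilinear / 4-linear objects.\<close>
definition cext1 :: "(real^'n \<Rightarrow> real^'n) \<Rightarrow> complex^'n \<Rightarrow> complex^'n" where
  "cext1 L z = cpl (L (cre z)) (L (cim z))"
definition cext2 :: "(real^'n \<Rightarrow> real^'n \<Rightarrow> real^'n) \<Rightarrow> complex^'n \<Rightarrow> complex^'n \<Rightarrow> complex^'n" where
  "cext2 B z w = cpl (B (cre z) (cre w) - B (cim z) (cim w)) (B (cre z) (cim w) + B (cim z) (cre w))"
definition cform2 :: "(real^'n \<Rightarrow> real^'n \<Rightarrow> real) \<Rightarrow> complex^'n \<Rightarrow> complex^'n \<Rightarrow> complex" where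
  "cform2 b z w = Complex (b (cre z) (cre w) - b (cim z) (cim w)) (b (cre z) (cim w) + b (cim z) (cre w))"
definition cpart :: "bool \<Rightarrow> complex^'n \<Rightarrow> real^'n" where
  "cpart b z = (if b then cim z else cre z)"
definition cform4 :: "(real^'n \<Rightarrow> real^'n \<Rightarrow> real^'n \<Rightarrow> real^'n \<Rightarrow> real) \<Rightarrow> complex^'n \<Rightarrow> complex^'n \<Rightarrow> complex^'n \<Rightarrow> complex^'n \<Rightarrow> complex" where
  "cform4 F z1 z2 z3 z4 = (\<Sum>b1\<in>UNIV. \<Sum>b2\<in>UNIV. \<Sum>b3\<in>UNIV. \<Sum>b4\<in>UNIV.
      (if b1 then \<i> else 1) * (if b2 then \<i> else 1) * (if b3 then \<i> else 1) * (if b4 then \<i> else 1)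
      * complex_of_real (F (cpart b1 z1) (cpart b2 z2) (cpart b3 z3) (cpart b4 z4)))"

definition is10 :: "(real^'n \<Rightarrow> real^'n \<Rightarrow> real^'n) \<Rightarrow> real^'n \<Rightarrow> complex^'n \<Rightarrow> bool" where
  "is10 J p \<zeta> \<longleftrightarrow> cext1 (J p) \<zeta> = \<i> *s \<zeta>"

definition almost_hermitian :: "(real^'n) set \<Rightarrow> (real^'n \<Rightarrow> real^'n \<Rightarrow> real^'n) \<Rightarrow> (real^'n \<Rightarrow> real^'n \<Rightarrow> real^'n \<Rightarrow> real) \<Rightarrow> bool" where
  "almost_hermitian U J g \<longleftrightarrow> open U \<and>
     (\<forall>p\<in>U. linear (J p) \<and> (\<forall>v. J p (J p v) = - v) \<and> bilinear (g p)
        \<and> (\<forall>v w. g p v w = g p w v) \<and> (\<forall>v. v \<noteq> 0 \<longrightarrow> g p v v > 0)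
        \<and> (\<forall>v w. g p (J p v) (J p w) = g p v w))
     \<and> (\<forall>u. smooth_on_set U (\<lambda>p. J p u)) \<and> (\<forall>u v. smooth_on_set U (\<lambda>p. g p u v))"

definition connection :: "(real^'n) set \<Rightarrow> (real^'n \<Rightarrow> real^'n \<Rightarrow> real^'n \<Rightarrow> real^'n) \<Rightarrow> bool" where
  "connection U \<Gamma> \<longleftrightarrow> (\<forall>p\<in>U. bilinear (\<Gamma> p)) \<and> (\<forall>u v. smooth_on_set U (\<lambda>p. \<Gamma> p u v))"

definition metric_compatible :: "(real^'n) set \<Rightarrow> (real^'n \<Rightarrow> real^'n \<Rightarrow> real^'n \<Rightarrow> real) \<Rightarrow> (real^'n \<Rightarrow> real^'n \<Rightarrow> real^'n \<Rightarrow> real^'n) \<Rightarrow> bool" where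
  "metric_compatible U g \<Gamma> \<longleftrightarrow> (\<forall>X Y Z. smooth_on_set U X \<longrightarrow> smooth_on_set U Y \<longrightarrow> smooth_on_set U Z \<longrightarrow>
     (\<forall>p\<in>U. frechet_derivative (\<lambda>q. g q (Y q) (Z q)) (at p) (X p)
              = g p (cov \<Gamma> X Y p) (Z p) + g p (Y p) (cov \<Gamma> X Z p)))"

definition levi_civita :: "(real^'n) set \<Rightarrow> (real^'n \<Rightarrow> real^'n \<Rightarrow> real^'n \<Rightarrow> real) \<Rightarrow> (real^'n \<Rightarrow> real^'n \<Rightarrow> real^'n \<Rightarrow> real^'n) \<Rightarrow> bool" where
  "levi_civita U g \<Gamma> \<longleftrightarrow> connection U \<Gamma> \<and> metric_compatible U g \<Gamma>
     \<and> (\<forall>X Y. smooth_on_set U X \<longrightarrow> smooth_on_set U Y \<longrightarrow> (\<forall>p\<in>U. torsion \<Gamma> X Y p = 0))"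

definition chern_connection :: "(real^'n) set \<Rightarrow> (real^'n \<Rightarrow> real^'n \<Rightarrow> real^'n) \<Rightarrow> (real^'n \<Rightarrow> real^'n \<Rightarrow> real^'n \<Rightarrow> real) \<Rightarrow> (real^'n \<Rightarrow> real^'n \<Rightarrow> real^'n \<Rightarrow> real^'n) \<Rightarrow> bool" where
  "chern_connection U J g \<Gamma> \<longleftrightarrow> connection U \<Gamma> \<and> metric_compatible U g \<Gamma>
     \<and> (\<forall>X Y. smooth_on_set U X \<longrightarrow> smooth_on_set U Y \<longrightarrow>
          (\<forall>p\<in>U. cov \<Gamma> X (\<lambda>q. J q (Y q)) p = J p (cov \<Gamma> X Y p)))
     \<and> (\<forall>p\<in>U. \<forall>\<zeta> \<eta>. is10 J p \<zeta> \<longrightarrow> is10 J p \<eta> \<longrightarrow> cext2 (tors_at \<Gamma> p) \<zeta> (cconj \<eta>) = 0)"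

end

theory Submission
  imports Defs
begin


lemma dder_const_ex: "\<exists>d. dder (\<lambda>_. c) vs = (\<lambda>_. d)"
proof (induction vs)
  case Nil then show ?case by auto
next
  case (Cons v vs)
  then obtain d where "dder (\<lambda>_. c) vs = (\<lambda>_. d)" by blast
  then show ?case by (auto intro!: exI[of _ 0])
qed

lemma smooth_const: "smooth_on_set U (\<lambda>_. c)"
  unfolding smooth_on_set_def
proof (intro allI ballI)
  fix vs p
  obtain d where "dder (\<lambda>_. c) vs = (\<lambda>_. d)" using dder_const_ex by blast
  then show "dder (\<lambda>_. c) vs differentiable (at p)" by simp
qed

lemma smooth_diff0: "smooth_on_set U f \<Longrightarrow> p \<in> U \<Longrightarrow> f differentiable (at p)"
proof -
  assume "smooth_on_set U f" "p \<in> U"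
  then have "dder f [] differentiable (at p)" unfolding smooth_on_set_def by blast
  then show ?thesis by simp
qed

lemma smooth_diff1: "smooth_on_set U f \<Longrightarrow> p \<in> U \<Longrightarrow> (\<lambda>q. frechet_derivative f (at q) u) differentiable (at p)"
proof -
  assume "smooth_on_set U f" "p \<in> U"
  then have "dder f [u] differentiable (at p)" unfolding smooth_on_set_def by blast
  then show ?thesis by simp
qed

lemma smooth_diff2: "smooth_on_set U f \<Longrightarrow> p \<in> U \<Longrightarrow>
   (\<lambda>q. frechet_derivative (\<lambda>q. frechet_derivative f (at q) u) (at q) v) differentiable (at p)"
proof -
  assume "smooth_on_set U f" "p \<in> U"
  then have "dder f [v,u] differentiable (at p)" unfolding smooth_on_set_def by blast
  then show ?thesis by simp
qed

lemma metric_at: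
  assumes "metric_compatible U g \<Gamma>" "p \<in> U"
  shows "frechet_derivative (\<lambda>q. g q a b) (at p) x = g p (\<Gamma> p x a) b + g p a (\<Gamma> p x b)"
proof -
  have H: "\<forall>X Y Z. smooth_on_set U X \<longrightarrow> smooth_on_set U Y \<longrightarrow> smooth_on_set U Z \<longrightarrow>
     (\<forall>p\<in>U. frechet_derivative (\<lambda>q. g q (Y q) (Z q)) (at p) (X p)
              = g p (cov \<Gamma> X Y p) (Z p) + g p (Y p) (cov \<Gamma> X Z p))"
    using assms(1) unfolding metric_compatible_def by blast
  show ?thesis using H[rule_format, OF smooth_const[of U x] smooth_const[of U a] smooth_const[of U b] assms(2)]
    by (simp add: cov_def)
qed

lemma chernJ_at:
  assumes "chern_connection U J g \<Gamma>" "p \<in> U"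
  shows "frechet_derivative (\<lambda>q. J q a) (at p) x = J p (\<Gamma> p x a) - \<Gamma> p x (J p a)"
proof -
  have H: "\<forall>X Y. smooth_on_set U X \<longrightarrow> smooth_on_set U Y \<longrightarrow>
          (\<forall>p\<in>U. cov \<Gamma> X (\<lambda>q. J q (Y q)) p = J p (cov \<Gamma> X Y p))"
    using assms(1) unfolding chern_connection_def by blast
  show ?thesis using H[rule_format, OF smooth_const[of U x] smooth_const[of U a] assms(2)]
    by (simp add: cov_def algebra_simps)
qed

lemma lc_sym_at:
  assumes "levi_civita U g \<Gamma>" "p \<in> U"
  shows "\<Gamma> p a b = \<Gamma> p b a"
proof -
  have H: "\<forall>X Y. smooth_on_set U X \<longrightarrow> smooth_on_set U Y \<longrightarrow> (\<forall>p\<in>U. torsion \<Gamma> X Y p = 0)"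
    using assms(1) unfolding levi_civita_def by blast
  show ?thesis using H[rule_format, OF smooth_const[of U a] smooth_const[of U b] assms(2)]
    by (simp add: cov_def torsion_def lie_def)
qed

lemma tors_at_eq: "tors_at \<Gamma> p u v = \<Gamma> p u v - \<Gamma> p v u"
  by (simp add: tors_at_def torsion_def cov_def lie_def)


lemma vec_expand: "(v::real^'m) = (\<Sum>i\<in>UNIV. (v$i) *\<^sub>R axis i 1)"
  using basis_expansion[of v] by (simp add: scalar_mult_eq_scaleR)

lemma bil_expand:
  fixes b :: "real^'m \<Rightarrow> real^'m \<Rightarrow> 'b::real_vector"
  assumes "bilinear b"
  shows "b v w = (\<Sum>i\<in>UNIV. \<Sum>j\<in>UNIV. (v$i * w$j) *\<^sub>R b (axis i 1) (axis j 1))"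
proof -
  have "b v w = b (\<Sum>i\<in>UNIV. (v$i) *\<^sub>R axis i 1) (\<Sum>j\<in>UNIV. (w$j) *\<^sub>R axis j 1)"
    using vec_expand[of v] vec_expand[of w] by simp
  also have "\<dots> = (\<Sum>(i,j)\<in>UNIV \<times> UNIV. b ((v$i) *\<^sub>R axis i 1) ((w$j) *\<^sub>R axis j 1))"
    by (rule bilinear_sum[OF assms])
  also have "\<dots> = (\<Sum>(i,j)\<in>UNIV \<times> UNIV. (v$i * w$j) *\<^sub>R b (axis i 1) (axis j 1))"
    by (simp add: bilinear_lmul[OF assms] bilinear_rmul[OF assms] mult.commute)
  also have "\<dots> = (\<Sum>i\<in>UNIV. \<Sum>j\<in>UNIV. (v$i * w$j) *\<^sub>R b (axis i 1) (axis j 1))"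
    by (simp add: sum.cartesian_product)
  finally show ?thesis .
qed

lemma lin_expand:
  fixes L :: "real^'m \<Rightarrow> 'b::real_vector"
  assumes "linear L"
  shows "L v = (\<Sum>i\<in>UNIV. (v$i) *\<^sub>R L (axis i 1))"
proof -
  have "L v = L (\<Sum>i\<in>UNIV. (v$i) *\<^sub>R axis i 1)" using vec_expand[of v] by simp
  also have "\<dots> = (\<Sum>i\<in>UNIV. (v$i) *\<^sub>R L (axis i 1))"
    by (simp add: linear_sum[OF assms] linear_scale[OF assms])
  finally show ?thesis .
qed

lemma bil_family_raw:
  fixes B :: "real^'m \<Rightarrow> real^'m \<Rightarrow> real^'m \<Rightarrow> 'b::real_normed_vector"
  assumes U: "open U" "p \<in> U" and bil: "\<forall>q\<in>U. bilinear (B q)"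
    and dif: "\<And>a b. (\<lambda>q. B q a b) differentiable (at p)"
    and V: "(V has_derivative V') (at p)" and W: "(W has_derivative W') (at p)"
  shows "((\<lambda>q. B q (V q) (W q)) has_derivative (\<lambda>h. \<Sum>i\<in>UNIV. \<Sum>j\<in>UNIV.
      (V' h$i * W p$j + V p$i * W' h$j) *\<^sub>R B p (axis i 1) (axis j 1)
      + (V p$i * W p$j) *\<^sub>R frechet_derivative (\<lambda>q. B q (axis i 1) (axis j 1)) (at p) h)) (at p)"
proof -
  have Vi: "((\<lambda>q. V q $ i) has_derivative (\<lambda>h. V' h $ i)) (at p)" for i
    using bounded_linear.has_derivative[OF bounded_linear_vec_nth V] .
  have Wi: "((\<lambda>q. W q $ i) has_derivative (\<lambda>h. W' h $ i)) (at p)" for i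
    using bounded_linear.has_derivative[OF bounded_linear_vec_nth W] .
  have C: "((\<lambda>q. B q a b) has_derivative frechet_derivative (\<lambda>q. B q a b) (at p)) (at p)" for a b
    using dif frechet_derivative_works by blast
  have D: "((\<lambda>q. \<Sum>i\<in>UNIV. \<Sum>j\<in>UNIV. (V q$i * W q$j) *\<^sub>R B q (axis i 1) (axis j 1)) has_derivative (\<lambda>h. \<Sum>i\<in>UNIV. \<Sum>j\<in>UNIV.
      (V' h$i * W p$j + V p$i * W' h$j) *\<^sub>R B p (axis i 1) (axis j 1)
      + (V p$i * W p$j) *\<^sub>R frechet_derivative (\<lambda>q. B q (axis i 1) (axis j 1)) (at p) h)) (at p)"
    apply (intro has_derivative_sum)
    apply (rule has_derivative_eq_rhs)
     apply (rule has_derivative_scaleR)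
      apply (rule has_derivative_mult[OF Vi Wi])
     apply (rule C)
    apply (rule ext)
    apply (simp only: add.commute[of "(V p $ _ * W' _ $ _)"])
    apply (simp only: add.commute[of "(V p $ _ * W p $ _) *\<^sub>R _"])
    done
  show ?thesis
    apply (rule has_derivative_transform_within_open[OF D U])
  proof -
    fix q assume "q \<in> U"
    then have "bilinear (B q)" using bil by blast
    then show "(\<Sum>i\<in>UNIV. \<Sum>j\<in>UNIV. (V q$i * W q$j) *\<^sub>R B q (axis i 1) (axis j 1)) = B q (V q) (W q)"
      by (rule bil_expand[symmetric])
  qed
qed

lemma frechet_bil_const:
  fixes B :: "real^'m \<Rightarrow> real^'m \<Rightarrow> real^'m \<Rightarrow> 'b::real_normed_vector"
  assumes U: "open U" "p \<in> U" and bil: "\<forall>q\<in>U. bilinear (B q)"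
    and dif: "\<And>a b. (\<lambda>q. B q a b) differentiable (at p)"
  shows "frechet_derivative (\<lambda>q. B q a b) (at p) h = (\<Sum>i\<in>UNIV. \<Sum>j\<in>UNIV.
      (a$i * b$j) *\<^sub>R frechet_derivative (\<lambda>q. B q (axis i 1) (axis j 1)) (at p) h)"
proof -
  have "((\<lambda>q. B q a b) has_derivative (\<lambda>h. \<Sum>i\<in>UNIV. \<Sum>j\<in>UNIV.
      (0 * b$j + a$i * 0) *\<^sub>R B p (axis i 1) (axis j 1)
      + (a$i * b$j) *\<^sub>R frechet_derivative (\<lambda>q. B q (axis i 1) (axis j 1)) (at p) h)) (at p)"
    using bil_family_raw[OF U bil dif, of "\<lambda>_. a" "\<lambda>_. 0" "\<lambda>_. b" "\<lambda>_. 0"] by simp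
  from fun_cong[OF frechet_derivative_at[OF this], of h, symmetric] show ?thesis by simp
qed

lemma bil_family_deriv:
  fixes B :: "real^'m \<Rightarrow> real^'m \<Rightarrow> real^'m \<Rightarrow> 'b::real_normed_vector"
  assumes U: "open U" "p \<in> U" and bil: "\<forall>q\<in>U. bilinear (B q)"
    and dif: "\<And>a b. (\<lambda>q. B q a b) differentiable (at p)"
    and V: "(V has_derivative V') (at p)" and W: "(W has_derivative W') (at p)"
  shows "((\<lambda>q. B q (V q) (W q)) has_derivative (\<lambda>h. frechet_derivative (\<lambda>q. B q (V p) (W p)) (at p) h
      + B p (V' h) (W p) + B p (V p) (W' h))) (at p)"
proof -
  have bp: "bilinear (B p)" using bil U by blast
  show ?thesis
    apply (rule has_derivative_eq_rhs[OF bil_family_raw[OF U bil dif V W]])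
    apply (rule ext)
    apply (subst frechet_bil_const[OF U bil dif, of "V p" "W p"])
    apply (subst bil_expand[OF bp, of "V' _"])
    apply (subst bil_expand[OF bp, of "V p" "W' _"])
    apply (simp only: scaleR_add_left sum.distrib add_ac)
    done
qed

lemma lin_family_raw:
  fixes L :: "real^'m \<Rightarrow> real^'m \<Rightarrow> 'b::real_normed_vector"
  assumes U: "open U" "p \<in> U" and lin: "\<forall>q\<in>U. linear (L q)"
    and dif: "\<And>a. (\<lambda>q. L q a) differentiable (at p)"
    and V: "(V has_derivative V') (at p)"
  shows "((\<lambda>q. L q (V q)) has_derivative (\<lambda>h. \<Sum>i\<in>UNIV.
      (V p$i) *\<^sub>R frechet_derivative (\<lambda>q. L q (axis i 1)) (at p) h + (V' h$i) *\<^sub>R L p (axis i 1))) (at p)"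
proof -
  have Vi: "((\<lambda>q. V q $ i) has_derivative (\<lambda>h. V' h $ i)) (at p)" for i
    using bounded_linear.has_derivative[OF bounded_linear_vec_nth V] .
  have C: "((\<lambda>q. L q a) has_derivative frechet_derivative (\<lambda>q. L q a) (at p)) (at p)" for a
    using dif frechet_derivative_works by blast
  have D: "((\<lambda>q. \<Sum>i\<in>UNIV. (V q$i) *\<^sub>R L q (axis i 1)) has_derivative (\<lambda>h. \<Sum>i\<in>UNIV.
      (V p$i) *\<^sub>R frechet_derivative (\<lambda>q. L q (axis i 1)) (at p) h + (V' h$i) *\<^sub>R L p (axis i 1))) (at p)"
    apply (intro has_derivative_sum)
    apply (rule has_derivative_scaleR[OF Vi C])
    done
  show ?thesis
    apply (rule has_derivative_transform_within_open[OF D U])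
  proof -
    fix q assume "q \<in> U"
    then have "linear (L q)" using lin by blast
    then show "(\<Sum>i\<in>UNIV. (V q$i) *\<^sub>R L q (axis i 1)) = L q (V q)"
      by (rule lin_expand[symmetric])
  qed
qed

lemma lin_family_deriv:
  fixes L :: "real^'m \<Rightarrow> real^'m \<Rightarrow> 'b::real_normed_vector"
  assumes U: "open U" "p \<in> U" and lin: "\<forall>q\<in>U. linear (L q)"
    and dif: "\<And>a. (\<lambda>q. L q a) differentiable (at p)"
    and V: "(V has_derivative V') (at p)"
  shows "((\<lambda>q. L q (V q)) has_derivative (\<lambda>h. frechet_derivative (\<lambda>q. L q (V p)) (at p) h
      + L p (V' h))) (at p)"
proof -
  have E: "frechet_derivative (\<lambda>q. L q a) (at p) h = (\<Sum>i\<in>UNIV.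
      (a$i) *\<^sub>R frechet_derivative (\<lambda>q. L q (axis i 1)) (at p) h)" for a h
  proof -
    have "((\<lambda>q. L q a) has_derivative (\<lambda>h. \<Sum>i\<in>UNIV.
      (a$i) *\<^sub>R frechet_derivative (\<lambda>q. L q (axis i 1)) (at p) h + (0::real^'m)$i *\<^sub>R L p (axis i 1))) (at p)"
      using lin_family_raw[OF U lin dif, of "\<lambda>_. a" "\<lambda>_. 0"] by simp
    from fun_cong[OF frechet_derivative_at[OF this], of h, symmetric] show ?thesis by simp
  qed
  have lp: "linear (L p)" using lin U by blast
  show ?thesis
    apply (rule has_derivative_eq_rhs[OF lin_family_raw[OF U lin dif V]])
    apply (rule ext)
    apply (subst E[of "V p"])
    apply (subst lin_expand[OF lp, of "V' _"])
    apply (simp only: sum.distrib)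
    done
qed


lemma line_deriv:
  fixes f :: "real^'m \<Rightarrow> real"
  assumes "f differentiable (at (a + s *\<^sub>R x))"
  shows "((\<lambda>s. f (a + s *\<^sub>R x)) has_derivative (\<lambda>t. t * frechet_derivative f (at (a + s *\<^sub>R x)) x)) (at s)"
proof -
  have l: "((\<lambda>s. a + s *\<^sub>R x) has_derivative (\<lambda>t. t *\<^sub>R x)) (at s)"
    by (auto intro!: derivative_eq_intros)
  have f: "(f has_derivative frechet_derivative f (at (a + s *\<^sub>R x))) (at (a + s *\<^sub>R x))"
    using assms frechet_derivative_works by blast
  have lin: "linear (frechet_derivative f (at (a + s *\<^sub>R x)))"
    using assms linear_frechet_derivative by blast
  have "((f \<circ> (\<lambda>s. a + s *\<^sub>R x)) has_derivative (frechet_derivative f (at (a + s *\<^sub>R x)) \<circ> (\<lambda>t. t *\<^sub>R x))) (at s)"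
    by (rule diff_chain_at[OF l f])
  moreover have "(frechet_derivative f (at (a + s *\<^sub>R x)) \<circ> (\<lambda>t. t *\<^sub>R x)) = (\<lambda>t. t * frechet_derivative f (at (a + s *\<^sub>R x)) x)"
    using linear_scale[OF lin] by (auto simp: fun_eq_iff)
  ultimately show ?thesis by (simp add: o_def)
qed

lemma mvt_line:
  fixes f :: "real^'m \<Rightarrow> real"
  assumes "h \<ge> 0" and "\<And>s. 0 \<le> s \<Longrightarrow> s \<le> h \<Longrightarrow> f differentiable (at (a + s *\<^sub>R x))"
  shows "\<exists>s. 0 \<le> s \<and> s \<le> h \<and> f (a + h *\<^sub>R x) - f a = h * frechet_derivative f (at (a + s *\<^sub>R x)) x"
proof -
  have "\<exists>s\<in>{0..h}. f (a + h *\<^sub>R x) - f (a + 0 *\<^sub>R x) = (h - 0) * frechet_derivative f (at (a + s *\<^sub>R x)) x"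
  proof (rule mvt_very_simple[of 0 h "\<lambda>s. f (a + s *\<^sub>R x)" "\<lambda>s t. t * frechet_derivative f (at (a + s *\<^sub>R x)) x", simplified mult.commute])
    show "0 \<le> h" using assms by simp
    fix s assume "0 \<le> s" "s \<le> h"
    then show "((\<lambda>s. f (a + s *\<^sub>R x)) has_derivative (\<lambda>t. t * frechet_derivative f (at (a + s *\<^sub>R x)) x)) (at s within {0..h})"
      using assms line_deriv has_derivative_at_withinI by blast
  qed
  then show ?thesis by auto
qed

lemma mixed_mvt:
  fixes f :: "real^'m \<Rightarrow> real"
  assumes B: "ball p d \<subseteq> U" and h: "h > 0" "h * (norm x + norm y) < d"
    and f1: "\<forall>q\<in>U. f differentiable (at q)"
    and fx: "\<forall>q\<in>U. (\<lambda>q. frechet_derivative f (at q) x) differentiable (at q)"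
  shows "\<exists>\<xi>. dist \<xi> p < d \<and> f (p + h *\<^sub>R x + h *\<^sub>R y) - f (p + h *\<^sub>R x) - f (p + h *\<^sub>R y) + f p
     = h * h * frechet_derivative (\<lambda>q. frechet_derivative f (at q) x) (at \<xi>) y"
proof -
  have inb: "p + s *\<^sub>R x + t *\<^sub>R y \<in> U" if "0 \<le> s" "s \<le> h" "0 \<le> t" "t \<le> h" for s t
  proof -
    have "norm (s *\<^sub>R x + t *\<^sub>R y) \<le> s * norm x + t * norm y"
      using that by (metis abs_of_nonneg norm_scaleR norm_triangle_le order_refl add_mono)
    also have "\<dots> \<le> h * norm x + h * norm y"
      using that by (intro add_mono mult_right_mono) auto
    also have "\<dots> < d" using h by (simp add: algebra_simps)
    finally have "dist (p + s *\<^sub>R x + t *\<^sub>R y) p < d" by (simp add: dist_norm add.assoc)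
    then show ?thesis using B by (auto simp: dist_commute)
  qed
  define \<alpha> where "\<alpha> s = f ((p + h *\<^sub>R y) + s *\<^sub>R x) - f (p + s *\<^sub>R x)" for s
  define fx' where "fx' = (\<lambda>q. frechet_derivative f (at q) x)"
  have der: "(\<alpha> has_derivative (\<lambda>t. t * (fx' ((p + h *\<^sub>R y) + s *\<^sub>R x) - fx' (p + s *\<^sub>R x)))) (at s)"
    if "0 \<le> s" "s \<le> h" for s
  proof -
    have d1: "f differentiable (at ((p + h *\<^sub>R y) + s *\<^sub>R x))"
      using f1 inb[OF that, of h] h by (simp add: algebra_simps)
    have d2: "f differentiable (at (p + s *\<^sub>R x))"
      using f1 inb[OF that, of 0] h by simp
    have "((\<lambda>s. \<alpha> s) has_derivative (\<lambda>t. t * fx' ((p + h *\<^sub>R y) + s *\<^sub>R x) - t * fx' (p + s *\<^sub>R x))) (at s)"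
      unfolding \<alpha>_def fx'_def
      by (rule has_derivative_diff[OF line_deriv[OF d1] line_deriv[OF d2]])
    then show ?thesis by (simp add: right_diff_distrib)
  qed
  have "\<exists>s\<in>{0..h}. \<alpha> h - \<alpha> 0 = (h - 0) * (fx' ((p + h *\<^sub>R y) + s *\<^sub>R x) - fx' (p + s *\<^sub>R x))"
  proof (rule mvt_very_simple[of 0 h \<alpha> "\<lambda>s t. t * (fx' ((p + h *\<^sub>R y) + s *\<^sub>R x) - fx' (p + s *\<^sub>R x))", simplified mult.commute])
    show "0 \<le> h" using h by simp
    fix s assume "0 \<le> s" "s \<le> h"
    then show "(\<alpha> has_derivative (\<lambda>t. t * (fx' ((p + h *\<^sub>R y) + s *\<^sub>R x) - fx' (p + s *\<^sub>R x)))) (at s within {0..h})"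
      using der has_derivative_at_withinI by blast
  qed
  then obtain \<sigma> where \<sigma>: "0 \<le> \<sigma>" "\<sigma> \<le> h" and
     eq1: "\<alpha> h - \<alpha> 0 = (h - 0) * (fx' ((p + h *\<^sub>R y) + \<sigma> *\<^sub>R x) - fx' (p + \<sigma> *\<^sub>R x))"
    by auto
  have "\<exists>t. 0 \<le> t \<and> t \<le> h \<and> fx' ((p + \<sigma> *\<^sub>R x) + h *\<^sub>R y) - fx' (p + \<sigma> *\<^sub>R x)
        = h * frechet_derivative fx' (at ((p + \<sigma> *\<^sub>R x) + t *\<^sub>R y)) y"
    apply (rule mvt_line)
    using h apply simp
    using fx inb \<sigma> unfolding fx'_def by blast
  then obtain \<tau> where \<tau>: "0 \<le> \<tau>" "\<tau> \<le> h" and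
    eq2: "fx' ((p + \<sigma> *\<^sub>R x) + h *\<^sub>R y) - fx' (p + \<sigma> *\<^sub>R x) = h * frechet_derivative fx' (at ((p + \<sigma> *\<^sub>R x) + \<tau> *\<^sub>R y)) y"
    by blast
  have dd: "dist (p + \<sigma> *\<^sub>R x + \<tau> *\<^sub>R y) p < d"
  proof -
    have "norm (\<sigma> *\<^sub>R x + \<tau> *\<^sub>R y) \<le> \<sigma> * norm x + \<tau> * norm y"
      using \<sigma> \<tau> by (metis abs_of_nonneg norm_scaleR norm_triangle_le order_refl add_mono)
    also have "\<dots> \<le> h * norm x + h * norm y"
      using \<sigma> \<tau> by (intro add_mono mult_right_mono) auto
    also have "\<dots> < d" using h by (simp add: algebra_simps)
    finally show ?thesis by (simp add: dist_norm add.assoc)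
  qed
  have "f (p + h *\<^sub>R x + h *\<^sub>R y) - f (p + h *\<^sub>R x) - f (p + h *\<^sub>R y) + f p = \<alpha> h - \<alpha> 0"
    unfolding \<alpha>_def by (simp add: algebra_simps)
  also have "\<dots> = h * (fx' ((p + \<sigma> *\<^sub>R x) + h *\<^sub>R y) - fx' (p + \<sigma> *\<^sub>R x))"
    using eq1 by (simp add: algebra_simps)
  also have "\<dots> = h * h * frechet_derivative fx' (at (p + \<sigma> *\<^sub>R x + \<tau> *\<^sub>R y)) y"
    using eq2 by simp
  finally show ?thesis using dd unfolding fx'_def by blast
qed

lemma schwarz:
  fixes f :: "real^'m \<Rightarrow> real"
  assumes U: "open U" "p \<in> U"
    and f1: "\<forall>q\<in>U. f differentiable (at q)"
    and fx: "\<forall>q\<in>U. (\<lambda>q. frechet_derivative f (at q) x) differentiable (at q)"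
    and fy: "\<forall>q\<in>U. (\<lambda>q. frechet_derivative f (at q) y) differentiable (at q)"
    and cxy: "continuous (at p) (\<lambda>q. frechet_derivative (\<lambda>q. frechet_derivative f (at q) x) (at q) y)"
    and cyx: "continuous (at p) (\<lambda>q. frechet_derivative (\<lambda>q. frechet_derivative f (at q) y) (at q) x)"
  shows "frechet_derivative (\<lambda>q. frechet_derivative f (at q) x) (at p) y
       = frechet_derivative (\<lambda>q. frechet_derivative f (at q) y) (at p) x"
    (is "?A p = ?B p")
proof (rule ccontr)
  assume ne: "?A p \<noteq> ?B p"
  define e where "e = \<bar>?A p - ?B p\<bar> / 2"
  have e: "e > 0" using ne unfolding e_def by simp
  obtain d1 where d1: "d1 > 0" "\<forall>q. dist q p < d1 \<longrightarrow> dist (?A q) (?A p) < e"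
    using cxy e unfolding continuous_at_eps_delta by blast
  obtain d2 where d2: "d2 > 0" "\<forall>q. dist q p < d2 \<longrightarrow> dist (?B q) (?B p) < e"
    using cyx e unfolding continuous_at_eps_delta by blast
  obtain d3 where d3: "d3 > 0" "ball p d3 \<subseteq> U" using U open_contains_ball by blast
  define d where "d = min d1 (min d2 d3)"
  have d: "d > 0" "ball p d \<subseteq> U" using d1 d2 d3 unfolding d_def by auto
  define h where "h = d / (2 * (norm x + norm y + 1))"
  have h: "h > 0" "h * (norm x + norm y) < d"
  proof -
    have pos: "norm x + norm y + 1 > 0" by (simp add: add_nonneg_pos)
    show "h > 0" unfolding h_def using d pos by simp
    have "h * (norm x + norm y) \<le> h * (norm x + norm y + 1)" using \<open>h > 0\<close> by simp
    also have "\<dots> = d / 2" unfolding h_def using pos by (simp add: field_simps)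
    also have "\<dots> < d" using d by simp
    finally show "h * (norm x + norm y) < d" .
  qed
  obtain \<xi> where \<xi>: "dist \<xi> p < d" and
    E1: "f (p + h *\<^sub>R x + h *\<^sub>R y) - f (p + h *\<^sub>R x) - f (p + h *\<^sub>R y) + f p = h * h * ?A \<xi>"
    using mixed_mvt[OF d(2) h f1 fx] by blast
  obtain \<eta> where \<eta>: "dist \<eta> p < d" and
    E2: "f (p + h *\<^sub>R y + h *\<^sub>R x) - f (p + h *\<^sub>R y) - f (p + h *\<^sub>R x) + f p = h * h * ?B \<eta>"
    using mixed_mvt[OF d(2), of h y x, OF h(1) _ f1 fy] h by (auto simp: add.commute)
  have "h * h * ?A \<xi> = h * h * ?B \<eta>" using E1 E2 by (simp add: algebra_simps)
  then have AB: "?A \<xi> = ?B \<eta>" using h by simp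
  have "dist (?A \<xi>) (?A p) < e" using d1 \<xi> unfolding d_def by auto
  moreover have "dist (?B \<eta>) (?B p) < e" using d2 \<eta> unfolding d_def by auto
  ultimately have "\<bar>?A p - ?B p\<bar> < 2 * e" using AB by (simp add: dist_real_def)
  then show False unfolding e_def by simp
qed


abbreviation fd :: "(real^'m \<Rightarrow> 'b::real_normed_vector) \<Rightarrow> real^'m \<Rightarrow> real^'m \<Rightarrow> 'b" where
  "fd f p u \<equiv> frechet_derivative f (at p) u"

lemma curv4_formula:
  assumes "bilinear (\<Gamma> p)"
  shows "curv4_at g \<Gamma> p x y z w = g p (fd (\<lambda>q. \<Gamma> q y z) p x + \<Gamma> p x (\<Gamma> p y z)
        - fd (\<lambda>q. \<Gamma> q x z) p y - \<Gamma> p y (\<Gamma> p x z)) w"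
  using assms by (simp add: curv4_at_def curv_def cov_def lie_def bilinear_lzero diff_diff_eq)

lemma cre_cpl[simp]: "cre (cpl a b) = a" by (simp add: cre_def cpl_def vec_eq_iff)
lemma cim_cpl[simp]: "cim (cpl a b) = b" by (simp add: cim_def cpl_def vec_eq_iff)
lemma cconj_cpl[simp]: "cconj (cpl a b) = cpl a (- b)" by (simp add: cconj_def cpl_def vec_eq_iff complex_eq_iff)
lemma cpl_eq_iff: "cpl a b = cpl c d \<longleftrightarrow> a = c \<and> b = d"
  by (auto simp: cpl_def vec_eq_iff complex_eq_iff)
lemma cpl_zero_iff: "cpl a b = 0 \<longleftrightarrow> a = 0 \<and> b = 0"
  by (auto simp: cpl_def vec_eq_iff complex_eq_iff)
lemma ii_cpl: "\<i> *s cpl a b = cpl (- b) a"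
  by (simp add: cpl_def vec_eq_iff complex_eq_iff)
lemma cpl_cre_cim: "cpl (cre z) (cim z) = z"
  by (simp add: cpl_def cre_def cim_def vec_eq_iff complex_eq_iff)
lemma vec_double0: "(v::real^'m) + v = 0 \<Longrightarrow> v = 0"
  by (simp add: vec_eq_iff)

locale AH =
  fixes U :: "(real^'m) set" and J :: "real^'m \<Rightarrow> real^'m \<Rightarrow> real^'m"
    and g :: "real^'m \<Rightarrow> real^'m \<Rightarrow> real^'m \<Rightarrow> real"
    and GL GD :: "real^'m \<Rightarrow> real^'m \<Rightarrow> real^'m \<Rightarrow> real^'m"
  assumes ah: "almost_hermitian U J g" and lc: "levi_civita U g GL" and ch: "chern_connection U J g GD"
begin

lemma openU: "open U" using ah unfolding almost_hermitian_def by blast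
lemma Jlin: "q \<in> U \<Longrightarrow> linear (J q)" using ah unfolding almost_hermitian_def by blast
lemma JJ: "q \<in> U \<Longrightarrow> J q (J q v) = - v" using ah unfolding almost_hermitian_def by blast
lemma gbil: "q \<in> U \<Longrightarrow> bilinear (g q)" using ah unfolding almost_hermitian_def by blast
lemma gsym: "q \<in> U \<Longrightarrow> g q v w = g q w v" using ah unfolding almost_hermitian_def by blast
lemma gpos: "q \<in> U \<Longrightarrow> v \<noteq> 0 \<Longrightarrow> g q v v > 0" using ah unfolding almost_hermitian_def by blast
lemma gJ: "q \<in> U \<Longrightarrow> g q (J q v) (J q w) = g q v w" using ah unfolding almost_hermitian_def by blast
lemma Jsm: "smooth_on_set U (\<lambda>p. J p u)" using ah unfolding almost_hermitian_def by blast
lemma gsm: "smooth_on_set U (\<lambda>p. g p u v)" using ah unfolding almost_hermitian_def by blast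
lemma conL: "connection U GL" using lc unfolding levi_civita_def by blast
lemma conD: "connection U GD" using ch unfolding chern_connection_def by blast
lemma metL: "metric_compatible U g GL" using lc unfolding levi_civita_def by blast
lemma metD: "metric_compatible U g GD" using ch unfolding chern_connection_def by blast
lemma GLbil: "q \<in> U \<Longrightarrow> bilinear (GL q)" using conL unfolding connection_def by blast
lemma GDbil: "q \<in> U \<Longrightarrow> bilinear (GD q)" using conD unfolding connection_def by blast
lemma GLsm: "smooth_on_set U (\<lambda>p. GL p u v)" using conL unfolding connection_def by blast
lemma GDsm: "smooth_on_set U (\<lambda>p. GD p u v)" using conD unfolding connection_def by blast

lemma Jskew: "q \<in> U \<Longrightarrow> g q (J q v) w = - g q v (J q w)"
proof -
  assume q: "q \<in> U"
  have "g q (J q v) w = g q (J q (J q v)) (J q w)" using gJ[OF q] by simp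
  also have "\<dots> = - g q v (J q w)" using JJ[OF q] bilinear_lneg[OF gbil[OF q]] by simp
  finally show ?thesis .
qed

lemma Jneg: "q \<in> U \<Longrightarrow> J q (- v) = - J q v" using Jlin linear_neg by blast

lemma torsD: "q \<in> U \<Longrightarrow> (GD q a b - GD q b a) + (GD q (J q a) (J q b) - GD q (J q b) (J q a)) = 0"
proof -
  assume q: "q \<in> U"
  define T where "T = tors_at GD q"
  have Teq: "T u v = GD q u v - GD q v u" for u v unfolding T_def by (rule tors_at_eq)
  have H: "\<forall>\<zeta> \<eta>. is10 J q \<zeta> \<longrightarrow> is10 J q \<eta> \<longrightarrow> cext2 T \<zeta> (cconj \<eta>) = 0"
    using ch q unfolding chern_connection_def T_def by blast
  have is10: "is10 J q (cpl v (- J q v))" for v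
    unfolding is10_def cext1_def
    by (simp add: ii_cpl cpl_eq_iff Jneg[OF q] JJ[OF q])
  have "cext2 T (cpl a (- J q a)) (cconj (cpl b (- J q b))) = 0"
    using H is10 by blast
  then have "T a b - T (- J q a) (J q b) = 0"
    unfolding cext2_def by (simp add: cpl_zero_iff)
  moreover have "T (- J q a) (J q b) = - T (J q a) (J q b)"
    unfolding Teq using bilinear_lneg[OF GDbil[OF q]] bilinear_rneg[OF GDbil[OF q]] by simp
  ultimately show ?thesis unfolding Teq by (simp add: algebra_simps)
qed

lemma torsD_JX: "q \<in> U \<Longrightarrow> GD q a (J q a) - GD q (J q a) a = 0"
proof -
  assume q: "q \<in> U"
  have t: "(GD q a (J q a) - GD q (J q a) a) + (GD q (J q a) (J q (J q a)) - GD q (J q (J q a)) (J q a)) = 0"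
    by (rule torsD[OF q])
  have e: "GD q (J q a) (J q (J q a)) = - GD q (J q a) a"
    using JJ[OF q] bilinear_rneg[OF GDbil[OF q]] by simp
  have f: "GD q (J q (J q a)) (J q a) = - GD q a (J q a)"
    using JJ[OF q] bilinear_lneg[OF GDbil[OF q]] by simp
  have "GD q (J q a) (J q (J q a)) - GD q (J q (J q a)) (J q a) = GD q a (J q a) - GD q (J q a) a"
    unfolding e f by simp
  then show ?thesis using t vec_double0 by metis
qed

lemma gdif: "q \<in> U \<Longrightarrow> (\<lambda>p. g p a b) differentiable (at q)" using smooth_diff0[OF gsm] .
lemma Jdif: "q \<in> U \<Longrightarrow> (\<lambda>p. J p a) differentiable (at q)" using smooth_diff0[OF Jsm] .
lemma GLdif: "q \<in> U \<Longrightarrow> (\<lambda>p. GL p a b) differentiable (at q)" using smooth_diff0[OF GLsm] .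
lemma GDdif: "q \<in> U \<Longrightarrow> (\<lambda>p. GD p a b) differentiable (at q)" using smooth_diff0[OF GDsm] .

lemma second_g:
  assumes q: "p \<in> U" and met: "metric_compatible U g \<Gamma>" and bil: "\<forall>q\<in>U. bilinear (\<Gamma> q)"
    and dif: "\<And>a b. (\<lambda>q. \<Gamma> q a b) differentiable (at p)"
  shows "fd (\<lambda>q. fd (\<lambda>q'. g q' z w) q y) p x =
      g p (\<Gamma> p x (\<Gamma> p y z)) w + g p (\<Gamma> p y z) (\<Gamma> p x w) + g p (fd (\<lambda>q. \<Gamma> q y z) p x) w
    + g p (\<Gamma> p x z) (\<Gamma> p y w) + g p z (\<Gamma> p x (\<Gamma> p y w)) + g p z (fd (\<lambda>q. \<Gamma> q y w) p x)"
proof -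
  have gb: "\<forall>q\<in>U. bilinear (g q)" using gbil by blast
  have gd: "\<And>a b. (\<lambda>q. g q a b) differentiable (at p)" using gdif[OF q] .
  have V1: "((\<lambda>q. \<Gamma> q y z) has_derivative fd (\<lambda>q. \<Gamma> q y z) p) (at p)"
    using dif frechet_derivative_works by blast
  have V2: "((\<lambda>q. \<Gamma> q y w) has_derivative fd (\<lambda>q. \<Gamma> q y w) p) (at p)"
    using dif frechet_derivative_works by blast
  have C: "((\<lambda>q. c) has_derivative (\<lambda>_. 0)) (at p)" for c :: "real^'m" by simp
  have D: "((\<lambda>q. g q (\<Gamma> q y z) w + g q z (\<Gamma> q y w)) has_derivative
     (\<lambda>h. (fd (\<lambda>q. g q (\<Gamma> p y z) w) p h + g p (fd (\<lambda>q. \<Gamma> q y z) p h) w + g p (\<Gamma> p y z) 0)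
        + (fd (\<lambda>q. g q z (\<Gamma> p y w)) p h + g p 0 (\<Gamma> p y w) + g p z (fd (\<lambda>q. \<Gamma> q y w) p h)))) (at p)"
    by (intro has_derivative_add bil_family_deriv[OF openU q gb gd V1 C] bil_family_deriv[OF openU q gb gd C V2])
  have E: "\<forall>q'\<in>U. fd (\<lambda>q. g q z w) q' y = g q' (\<Gamma> q' y z) w + g q' z (\<Gamma> q' y w)"
    using metric_at[OF met] by blast
  have F: "fd (\<lambda>q. fd (\<lambda>q'. g q' z w) q y) p x = fd (\<lambda>q. g q (\<Gamma> q y z) w + g q z (\<Gamma> q y w)) p x"
  proof -
    have "fd (\<lambda>q. g q (\<Gamma> q y z) w + g q z (\<Gamma> q y w)) p = fd (\<lambda>q. fd (\<lambda>q'. g q' z w) q y) p"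
      apply (rule frechet_derivative_transform_within_open[OF _ openU q])
      using D differentiableI apply blast
      using E by simp
    then show ?thesis by simp
  qed
  show ?thesis
    unfolding F fun_cong[OF frechet_derivative_at[OF D, symmetric]]
    using metric_at[OF met q] bilinear_lzero[OF gbil[OF q]] bilinear_rzero[OF gbil[OF q]]
    by (simp add: algebra_simps)
qed

end


context AH begin

lemma second_sym:
  assumes q: "p \<in> U"
  shows "fd (\<lambda>q. fd (\<lambda>q'. g q' z w) q y) p x = fd (\<lambda>q. fd (\<lambda>q'. g q' z w) q x) p y"
proof -
  define f where "f = (\<lambda>q'. g q' z w)"
  have sm: "smooth_on_set U f" unfolding f_def by (rule gsm)
  have "fd (\<lambda>q. fd f q x) p y = fd (\<lambda>q. fd f q y) p x"
  proof (rule schwarz[OF openU q])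
    show "\<forall>q\<in>U. f differentiable at q" using smooth_diff0[OF sm] by blast
    show "\<forall>q\<in>U. (\<lambda>q. fd f q x) differentiable at q" using smooth_diff1[OF sm] by blast
    show "\<forall>q\<in>U. (\<lambda>q. fd f q y) differentiable at q" using smooth_diff1[OF sm] by blast
    show "continuous (at p) (\<lambda>q. fd (\<lambda>q. fd f q x) q y)"
      using smooth_diff2[OF sm q, of x y] differentiable_imp_continuous_within by blast
    show "continuous (at p) (\<lambda>q. fd (\<lambda>q. fd f q y) q x)"
      using smooth_diff2[OF sm q, of y x] differentiable_imp_continuous_within by blast
  qed
  then show ?thesis unfolding f_def by simp
qed

lemma second_gD:
  assumes q: "p \<in> U"
  shows "fd (\<lambda>q. fd (\<lambda>q'. g q' z w) q y) p x =
      g p (GD p x (GD p y z)) w + g p (GD p y z) (GD p x w) + g p (fd (\<lambda>q. GD q y z) p x) w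
    + g p (GD p x z) (GD p y w) + g p z (GD p x (GD p y w)) + g p z (fd (\<lambda>q. GD q y w) p x)"
  by (rule second_g[OF q metD]) (use GDbil GDdif[OF q] in auto)

lemma second_gL:
  assumes q: "p \<in> U"
  shows "fd (\<lambda>q. fd (\<lambda>q'. g q' z w) q y) p x =
      g p (GL p x (GL p y z)) w + g p (GL p y z) (GL p x w) + g p (fd (\<lambda>q. GL q y z) p x) w
    + g p (GL p x z) (GL p y w) + g p z (GL p x (GL p y w)) + g p z (fd (\<lambda>q. GL q y w) p x)"
  by (rule second_g[OF q metL]) (use GLbil GLdif[OF q] in auto)

lemma dL_sym:
  assumes q: "p \<in> U"
  shows "fd (\<lambda>q. GL q a b) p u = fd (\<lambda>q. GL q b a) p u"
proof -
  have "fd (\<lambda>q. GL q a b) p = fd (\<lambda>q. GL q b a) p"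
    apply (rule frechet_derivative_transform_within_open[OF GLdif[OF q] openU q])
    using lc_sym_at[OF lc] by blast
  then show ?thesis by simp
qed

lemma E1:
  assumes q: "p \<in> U"
  shows "fd (\<lambda>q. GD q X (J p X)) p u + GD p X (fd (\<lambda>q. J q X) p u)
       - (fd (\<lambda>q. GD q (J p X) X) p u + GD p (fd (\<lambda>q. J q X) p u) X) = 0"
proof -
  have gb: "\<forall>q\<in>U. bilinear (GD q)" using GDbil by blast
  have gd: "\<And>a b. (\<lambda>q. GD q a b) differentiable (at p)" using GDdif[OF q] .
  have V: "((\<lambda>q. J q X) has_derivative fd (\<lambda>q. J q X) p) (at p)"
    using Jdif[OF q] frechet_derivative_works by blast
  have C: "((\<lambda>q. X) has_derivative (\<lambda>_. 0)) (at p)" by simp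
  have D: "((\<lambda>q. GD q X (J q X) - GD q (J q X) X) has_derivative
     (\<lambda>h. (fd (\<lambda>q. GD q X (J p X)) p h + GD p 0 (J p X) + GD p X (fd (\<lambda>q. J q X) p h))
        - (fd (\<lambda>q. GD q (J p X) X) p h + GD p (fd (\<lambda>q. J q X) p h) X + GD p (J p X) 0))) (at p)"
    by (intro has_derivative_diff bil_family_deriv[OF openU q gb gd C V] bil_family_deriv[OF openU q gb gd V C])
  have Z: "((\<lambda>q. GD q X (J q X) - GD q (J q X) X) has_derivative (\<lambda>_. 0)) (at p)"
  proof (rule has_derivative_transform_within_open[OF _ openU q])
    show "((\<lambda>q. 0::real^'m) has_derivative (\<lambda>_. 0)) (at p)" by simp
    fix q assume "q \<in> U" then show "0 = GD q X (J q X) - GD q (J q X) X" using torsD_JX by simp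
  qed
  have "(\<lambda>h. (fd (\<lambda>q. GD q X (J p X)) p h + GD p 0 (J p X) + GD p X (fd (\<lambda>q. J q X) p h))
        - (fd (\<lambda>q. GD q (J p X) X) p h + GD p (fd (\<lambda>q. J q X) p h) X + GD p (J p X) 0)) = (\<lambda>_. 0)"
    using has_derivative_unique[OF D Z] .
  from fun_cong[OF this, of u] show ?thesis
    using bilinear_lzero[OF GDbil[OF q]] bilinear_rzero[OF GDbil[OF q]] by simp
qed

lemma curv_skew_gen:
  assumes q: "p \<in> U" and \<Gamma>b: "bilinear (\<Gamma> p)"
    and S: "\<And>x y. fd (\<lambda>q. fd (\<lambda>q'. g q' z w) q y) p x =
      g p (\<Gamma> p x (\<Gamma> p y z)) w + g p (\<Gamma> p y z) (\<Gamma> p x w) + g p (fd (\<lambda>q. \<Gamma> q y z) p x) w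
    + g p (\<Gamma> p x z) (\<Gamma> p y w) + g p z (\<Gamma> p x (\<Gamma> p y w)) + g p z (fd (\<lambda>q. \<Gamma> q y w) p x)"
  shows "curv4_at g \<Gamma> p x y z w + curv4_at g \<Gamma> p x y w z = 0"
proof -
  have e: "fd (\<lambda>q. fd (\<lambda>q'. g q' z w) q y) p x = fd (\<lambda>q. fd (\<lambda>q'. g q' z w) q x) p y"
    by (rule second_sym[OF q])
  have gb: "bilinear (g p)" by (rule gbil[OF q])
  show ?thesis
    using e unfolding S curv4_formula[where \<Gamma>=\<Gamma> and p=p, OF \<Gamma>b]
    by (simp add: bilinear_ladd[OF gb] bilinear_lsub[OF gb] bilinear_radd[OF gb] bilinear_rsub[OF gb] gsym[OF q, of _ z] gsym[OF q, of _ w])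
qed

lemma curv_skewD: "p \<in> U \<Longrightarrow> curv4_at g GD p x y z w + curv4_at g GD p x y w z = 0"
  by (rule curv_skew_gen[OF _ GDbil second_gD])
lemma curv_skewL: "p \<in> U \<Longrightarrow> curv4_at g GL p x y z w + curv4_at g GL p x y w z = 0"
  by (rule curv_skew_gen[OF _ GLbil second_gL])

end


lemma vdouble0: "(v::real^'m) + v = 0 \<Longrightarrow> v = 0"
  by (simp add: vec_eq_iff)

locale alg =
  fixes gg :: "real^'m \<Rightarrow> real^'m \<Rightarrow> real" and JJ :: "real^'m \<Rightarrow> real^'m"
    and G \<Gamma> :: "real^'m \<Rightarrow> real^'m \<Rightarrow> real^'m"
  assumes gb: "bilinear gg" and gs: "gg a b = gg b a" and Jl: "linear JJ"
    and JJ2: "JJ (JJ v) = - v" and gJ: "gg (JJ a) (JJ b) = gg a b"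
    and Gb: "bilinear G" and Gs: "G a b = G b a" and \<Gamma>b: "bilinear \<Gamma>"
    and mc: "gg (\<Gamma> u a) b + gg a (\<Gamma> u b) = gg (G u a) b + gg a (G u b)"
    and tor: "(\<Gamma> a b - \<Gamma> b a) + (\<Gamma> (JJ a) (JJ b) - \<Gamma> (JJ b) (JJ a)) = 0"
begin

lemmas gl = bilinear_ladd[OF gb] bilinear_radd[OF gb] bilinear_lsub[OF gb] bilinear_rsub[OF gb]
  bilinear_lneg[OF gb] bilinear_rneg[OF gb] bilinear_lmul[OF gb] bilinear_rmul[OF gb]
  bilinear_lzero[OF gb] bilinear_rzero[OF gb]
lemmas Gl = bilinear_ladd[OF Gb] bilinear_radd[OF Gb] bilinear_lsub[OF Gb] bilinear_rsub[OF Gb]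
  bilinear_lneg[OF Gb] bilinear_rneg[OF Gb] bilinear_lmul[OF Gb] bilinear_rmul[OF Gb]
  bilinear_lzero[OF Gb] bilinear_rzero[OF Gb]
lemmas \<Gamma>l = bilinear_ladd[OF \<Gamma>b] bilinear_radd[OF \<Gamma>b] bilinear_lsub[OF \<Gamma>b] bilinear_rsub[OF \<Gamma>b]
  bilinear_lneg[OF \<Gamma>b] bilinear_rneg[OF \<Gamma>b] bilinear_lmul[OF \<Gamma>b] bilinear_rmul[OF \<Gamma>b]
  bilinear_lzero[OF \<Gamma>b] bilinear_rzero[OF \<Gamma>b]
lemmas Jlin = linear_add[OF Jl] linear_diff[OF Jl] linear_neg[OF Jl] linear_scale[OF Jl] linear_0[OF Jl]
lemmas N = gl Gl \<Gamma>l Jlin JJ2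

lemma Jsk: "gg (JJ a) b = - gg a (JJ b)"
proof -
  have "gg (JJ a) b = gg (JJ (JJ a)) (JJ b)" by (simp add: gJ)
  then show ?thesis by (simp add: JJ2 gl)
qed

lemma selfA: "gg (\<Gamma> u a) a = gg (G u a) a"
  using mc[of u a a] gs[of a "\<Gamma> u a"] gs[of a "G u a"] by simp

lemma TJ: "\<Gamma> a (JJ a) = \<Gamma> (JJ a) a"
proof -
  have t: "(\<Gamma> a (JJ a) - \<Gamma> (JJ a) a) + (\<Gamma> (JJ a) (JJ (JJ a)) - \<Gamma> (JJ (JJ a)) (JJ a)) = 0"
    by (rule tor)
  have "\<Gamma> (JJ a) (JJ (JJ a)) - \<Gamma> (JJ (JJ a)) (JJ a) = \<Gamma> a (JJ a) - \<Gamma> (JJ a) a"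
    by (simp add: JJ2 \<Gamma>l)
  then have "(\<Gamma> a (JJ a) - \<Gamma> (JJ a) a) + (\<Gamma> a (JJ a) - \<Gamma> (JJ a) a) = 0" using t by simp
  then show ?thesis using vdouble0 by fastforce
qed

lemma alpha: "gg a (\<Gamma> a v - \<Gamma> v a) = - (gg (\<Gamma> a a) v - gg (G a a) v)"
proof -
  have 1: "gg (\<Gamma> a a) v + gg a (\<Gamma> a v) = gg (G a a) v + gg a (G a v)" by (rule mc)
  have 2: "gg a (\<Gamma> v a) = gg a (G v a)" using selfA[of v a] gs by metis
  show ?thesis using 1 2 Gs[of v a] by (simp add: gl)
qed

lemma torJ: "\<Gamma> a b - \<Gamma> b a = - (\<Gamma> (JJ a) (JJ b) - \<Gamma> (JJ b) (JJ a))"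
  by (subst eq_neg_iff_add_eq_0) (rule tor)

lemma gamma: "gg (JJ a) (\<Gamma> a v - \<Gamma> v a) = gg (\<Gamma> (JJ a) (JJ a)) (JJ v) - gg (G (JJ a) (JJ a)) (JJ v)"
proof -
  have "gg (JJ a) (\<Gamma> a v - \<Gamma> v a) = - gg (JJ a) (\<Gamma> (JJ a) (JJ v) - \<Gamma> (JJ v) (JJ a))"
    unfolding torJ[of a v] by (simp add: gl)
  then show ?thesis using alpha[of "JJ a" "JJ v"] by simp
qed

lemma delta: "gg a (\<Gamma> (JJ a) v - \<Gamma> v (JJ a)) = - (gg (\<Gamma> a a) (JJ v) - gg (G a a) (JJ v))"
proof -
  have "\<Gamma> (JJ a) v - \<Gamma> v (JJ a) = - (\<Gamma> (JJ (JJ a)) (JJ v) - \<Gamma> (JJ v) (JJ (JJ a)))" by (rule torJ)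
  also have "\<dots> = \<Gamma> a (JJ v) - \<Gamma> (JJ v) a" by (simp add: JJ2 \<Gamma>l)
  finally show ?thesis using alpha[of a "JJ v"] by simp
qed

lemma key: "gg (\<Gamma> X X - G X X) w - gg (\<Gamma> (JJ X) (JJ X) - G (JJ X) (JJ X)) w
   = 2 * gg (JJ (\<Gamma> X (JJ X) - G X (JJ X))) w"
proof -
  have h1: "gg (JJ (\<Gamma> X (JJ X) - G X (JJ X))) w = - gg (\<Gamma> X (JJ X) - G X (JJ X)) (JJ w)" by (rule Jsk)
  have h2: "gg (\<Gamma> X (JJ X)) (JJ w) + gg (JJ X) (\<Gamma> X (JJ w)) = gg (G X (JJ X)) (JJ w) + gg (JJ X) (G X (JJ w))" by (rule mc)
  have h3: "gg (\<Gamma> (JJ X) X) (JJ w) + gg X (\<Gamma> (JJ X) (JJ w)) = gg (G (JJ X) X) (JJ w) + gg X (G (JJ X) (JJ w))" by (rule mc)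
  have h4: "gg (\<Gamma> (JJ w) X) (JJ X) + gg X (\<Gamma> (JJ w) (JJ X)) = gg (G (JJ w) X) (JJ X) + gg X (G (JJ w) (JJ X))" by (rule mc)
  have h5: "\<Gamma> X (JJ X) = \<Gamma> (JJ X) X" by (rule TJ)
  have t1: "\<Gamma> (JJ X) w - \<Gamma> w (JJ X) = - (\<Gamma> (JJ (JJ X)) (JJ w) - \<Gamma> (JJ w) (JJ (JJ X)))" by (rule torJ)
  have t2: "\<Gamma> X w - \<Gamma> w X = - (\<Gamma> (JJ X) (JJ w) - \<Gamma> (JJ w) (JJ X))" by (rule torJ)
  have a1: "gg X (\<Gamma> X w - \<Gamma> w X) = - (gg (\<Gamma> X X) w - gg (G X X) w)" by (rule alpha)
  have a2: "gg (JJ X) (\<Gamma> (JJ X) w - \<Gamma> w (JJ X)) = - (gg (\<Gamma> (JJ X) (JJ X)) w - gg (G (JJ X) (JJ X)) w)" by (rule alpha)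
  have b1: "gg (JJ X) (\<Gamma> (JJ X) w - \<Gamma> w (JJ X)) = gg (JJ X) (\<Gamma> X (JJ w) - \<Gamma> (JJ w) X)"
    using t1 by (simp add: N)
  have b2: "gg X (\<Gamma> X w - \<Gamma> w X) = - gg X (\<Gamma> (JJ X) (JJ w) - \<Gamma> (JJ w) (JJ X))"
    using t2 by (simp add: N)
  show ?thesis using h1 h2 h3 h4 h5 a1 a2 b1 b2 Gs[of "JJ X" X] Gs[of "JJ w" X] Gs[of "JJ w" "JJ X"]
    by (simp add: N gs[of X] gs[of "JJ X"])
qed

lemma core:
  fixes dD dL :: "real^'m \<Rightarrow> real^'m \<Rightarrow> real^'m \<Rightarrow> real^'m" and X :: "real^'m"
  assumes meq: "\<And>x y z w. gg (\<Gamma> x (\<Gamma> y z)) w + gg (\<Gamma> y z) (\<Gamma> x w) + gg (dD x y z) w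
         + gg (\<Gamma> x z) (\<Gamma> y w) + gg z (\<Gamma> x (\<Gamma> y w)) + gg z (dD x y w)
       = gg (G x (G y z)) w + gg (G y z) (G x w) + gg (dL x y z) w
         + gg (G x z) (G y w) + gg z (G x (G y w)) + gg z (dL x y w)"
    and e1: "\<And>u. dD u X (JJ X) + \<Gamma> X (JJ (\<Gamma> u X) - \<Gamma> u (JJ X))
         - (dD u (JJ X) X + \<Gamma> (JJ (\<Gamma> u X) - \<Gamma> u (JJ X)) X) = 0"
    and ls: "\<And>u a b. dL u a b = dL u b a"
  shows "gg (dD X (JJ X) (JJ X) + \<Gamma> X (\<Gamma> (JJ X) (JJ X)) - dD (JJ X) X (JJ X) - \<Gamma> (JJ X) (\<Gamma> X (JJ X))) X
       - gg (dL X (JJ X) (JJ X) + G X (G (JJ X) (JJ X)) - dL (JJ X) X (JJ X) - G (JJ X) (G X (JJ X))) X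
       = gg (\<Gamma> X X - G X X) (\<Gamma> (JJ X) (JJ X) - G (JJ X) (JJ X))
       - gg (\<Gamma> X (JJ X) - G X (JJ X)) (\<Gamma> X (JJ X) - G X (JJ X))"
proof -
  define Y where "Y = JJ X"
  define P where "P = \<Gamma> X X - G X X"
  define Q where "Q = \<Gamma> Y Y - G Y Y"
  define R where "R = \<Gamma> X Y - G X Y"
  define v1 where "v1 = JJ (\<Gamma> X X) - \<Gamma> X Y"
  define v2 where "v2 = JJ (\<Gamma> Y X) - \<Gamma> Y Y"
  define dg where "dg x a b = gg (G x a) b + gg a (G x b)" for x a b
  define Mg where "Mg x y z w = gg (\<Gamma> x (\<Gamma> y z)) w + gg (\<Gamma> y z) (\<Gamma> x w)
         + gg (\<Gamma> x z) (\<Gamma> y w) + gg z (\<Gamma> x (\<Gamma> y w))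
       - (gg (G x (G y z)) w + gg (G y z) (G x w) + gg (G x z) (G y w) + gg z (G x (G y w)))" for x y z w
  define quad where "quad = gg (\<Gamma> X (\<Gamma> Y Y) - \<Gamma> Y (\<Gamma> X Y)) X - gg (G X (G Y Y) - G Y (G X Y)) X"
  define F1 where "F1 = (1/2) * Mg X X Y Y - gg (\<Gamma> X v1 - \<Gamma> v1 X) Y - Mg X Y Y X
      + (1/2) * Mg Y Y X X + gg (\<Gamma> X v2 - \<Gamma> v2 X) X + quad"
  \<comment> \<open>Step 1: eliminate the derivative terms\<close>
  have m1: "gg (dD X Y Y - dL X Y Y) X + gg Y (dD X Y X - dL X Y X) = - Mg X Y Y X"
    using meq[of X Y Y X] unfolding Mg_def by (simp add: gl)
  have m2: "gg (dD X X Y - dL X X Y) Y + gg Y (dD X X Y - dL X X Y) = - Mg X X Y Y"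
    using meq[of X X Y Y] unfolding Mg_def by (simp add: gl)
  have m3: "gg (dD Y Y X - dL Y Y X) X + gg X (dD Y Y X - dL Y Y X) = - Mg Y Y X X"
    using meq[of Y Y X X] unfolding Mg_def by (simp add: gl)
  have ee1: "(dD X X Y - dL X X Y) - (dD X Y X - dL X Y X) = - (\<Gamma> X v1 - \<Gamma> v1 X)"
    using e1[of X] ls[of X X Y] unfolding v1_def Y_def by (simp add: algebra_simps)
  have ee2: "(dD Y X Y - dL Y X Y) - (dD Y Y X - dL Y Y X) = - (\<Gamma> X v2 - \<Gamma> v2 X)"
    using e1[of Y] ls[of Y X Y] unfolding v2_def Y_def by (simp add: algebra_simps)
  have s1: "gg (dD X X Y - dL X X Y) Y - gg (dD X Y X - dL X Y X) Y = - gg (\<Gamma> X v1 - \<Gamma> v1 X) Y"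
    using arg_cong[OF ee1, of "\<lambda>v. gg v Y"] by (simp add: gl)
  have s2: "gg (dD Y X Y - dL Y X Y) X - gg (dD Y Y X - dL Y Y X) X = - gg (\<Gamma> X v2 - \<Gamma> v2 X) X"
    using arg_cong[OF ee2, of "\<lambda>v. gg v X"] by (simp add: gl)
  have step1: "gg (dD X Y Y + \<Gamma> X (\<Gamma> Y Y) - dD Y X Y - \<Gamma> Y (\<Gamma> X Y)) X
       - gg (dL X Y Y + G X (G Y Y) - dL Y X Y - G Y (G X Y)) X = F1"
    unfolding F1_def quad_def
    using m1 m2 m3 s1 s2 gs[of Y "dD X Y X - dL X Y X"] gs[of Y "dD X X Y - dL X X Y"] gs[of X "dD Y Y X - dL Y Y X"]
    by (simp add: gl) 
  have mg1: "Mg X X Y Y = 2 * dg X R Y"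
    using mc[of X "\<Gamma> X Y" Y] mc[of X Y "\<Gamma> X Y"] unfolding Mg_def dg_def R_def
    by (simp add: N gs[of Y])
  have RR: "\<Gamma> Y X - G Y X = R" unfolding R_def Y_def using TJ[of X] Gs[of X "JJ X"] by simp
  have mg2: "Mg Y Y X X = 2 * dg Y R X"
    using mc[of Y "\<Gamma> Y X" X] mc[of Y X "\<Gamma> Y X"] unfolding Mg_def dg_def RR[symmetric]
    by (simp add: N gs[of X])
  have mg3: "Mg X Y Y X = dg X Q X + dg X Y R"
    using mc[of X "\<Gamma> Y Y" X] mc[of X Y "\<Gamma> Y X"] unfolding Mg_def dg_def RR[symmetric] Q_def
    by (simp add: N)
  have tg1: "gg (\<Gamma> X v1 - \<Gamma> v1 X) Y = gg Q (JJ v1)"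
    using gamma[of X v1] unfolding Q_def Y_def by (simp add: gs[of "JJ X"] gl)
  have tg2: "gg (\<Gamma> X v2 - \<Gamma> v2 X) X = - gg P v2"
    using alpha[of X v2] unfolding P_def by (simp add: gs[of X] gl)
  have qd: "quad = gg (G X Q) X + gg (\<Gamma> Y Y) (G X X) - gg (\<Gamma> Y Y) (\<Gamma> X X)
      - gg (G Y R) X - gg (\<Gamma> X Y) (G Y X) + gg (\<Gamma> X Y) (\<Gamma> Y X)"
    using mc[of X "\<Gamma> Y Y" X] mc[of Y "\<Gamma> X Y" X] unfolding quad_def Q_def R_def
    by (simp add: N)
  have k: "gg P (JJ (\<Gamma> X Y)) - gg Q (JJ (\<Gamma> X Y)) = 2 * gg (JJ R) (JJ (\<Gamma> X Y))"
    using key[of X "JJ (\<Gamma> X Y)"] unfolding P_def Q_def R_def Y_def .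
  have k2: "gg (JJ R) (JJ (\<Gamma> X Y)) = gg R (\<Gamma> X Y)" by (rule gJ)
  have tj: "\<Gamma> Y X = \<Gamma> X Y" unfolding Y_def using TJ[of X] by simp
  have step2: "F1 = gg P Q - gg R R"
    unfolding F1_def mg1 mg2 mg3 tg1 tg2 qd
    using k k2
    unfolding dg_def v1_def v2_def P_def Q_def R_def
    apply (simp add: N gs gJ tj Gs[of Y X])
    apply (simp add: field_simps)
    done
  show ?thesis using step1 step2 unfolding P_def Q_def R_def Y_def by simp
qed

end


lemma parseval:
  fixes gg :: "real^'m \<Rightarrow> real^'m \<Rightarrow> real" and f :: "'i \<Rightarrow> real^'m" and I :: "'i set"
  assumes gb: "bilinear gg" and gs: "\<And>a b. gg a b = gg b a" and fin: "finite I"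
    and cI: "card I = CARD('m)"
    and orth: "\<And>k l. k \<in> I \<Longrightarrow> l \<in> I \<Longrightarrow> gg (f k) (f l) = (if k = l then 1 else 0)"
  shows "gg v v = (\<Sum>k\<in>I. (gg v (f k))\<^sup>2)"
proof -
  have inj: "inj_on f I"
  proof (rule inj_onI)
    fix k l assume "k \<in> I" "l \<in> I" "f k = f l"
    then have "gg (f k) (f l) = 1" using orth[of k k] by simp
    then show "k = l" using orth[of k l] \<open>k \<in> I\<close> \<open>l \<in> I\<close> by (auto split: if_splits)
  qed
  define B where "B = f ` I"
  have finB: "finite B" unfolding B_def using fin by simp
  have cB: "card B = CARD('m)" unfolding B_def using card_image[OF inj] cI by simp
  have lin2: "linear (gg v)" for v using gb unfolding bilinear_def by blast
  have lin1: "linear (\<lambda>x. gg x w)" for w using gb unfolding bilinear_def by blast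
  have coef: "gg (\<Sum>b\<in>B. u b *\<^sub>R b) c = u c" if "c \<in> B" for u c
  proof -
    have "gg (\<Sum>b\<in>B. u b *\<^sub>R b) c = (\<Sum>b\<in>B. u b * gg b c)"
      by (simp add: linear_sum[OF lin1] linear_scale[OF lin1])
    also have "\<dots> = (\<Sum>b\<in>B. if b = c then u b else 0)"
    proof (rule sum.cong[OF refl])
      fix b assume "b \<in> B"
      then obtain k l where "k \<in> I" "l \<in> I" "b = f k" "c = f l" using \<open>c \<in> B\<close> unfolding B_def by blast
      then show "u b * gg b c = (if b = c then u b else 0)" using orth[of k l] inj_onD[OF inj, of k l] by auto
    qed
    also have "\<dots> = u c" using finB that by simp
    finally show ?thesis .
  qed
  have ind: "independent B"
    unfolding dependent_finite[OF finB]
  proof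
    assume "\<exists>u. (\<exists>v\<in>B. u v \<noteq> 0) \<and> (\<Sum>v\<in>B. u v *\<^sub>R v) = 0"
    then obtain u c where "c \<in> B" "u c \<noteq> 0" "(\<Sum>v\<in>B. u v *\<^sub>R v) = 0" by blast
    then show False using coef[of c u] bilinear_lzero[OF gb] by simp
  qed
  have "UNIV \<subseteq> span B"
    by (rule card_ge_dim_independent) (use ind cB in auto)
  then have "v \<in> span B" by blast
  then obtain u where u: "v = (\<Sum>b\<in>B. u b *\<^sub>R b)" unfolding span_finite[OF finB] by auto
  have "gg v v = (\<Sum>b\<in>B. u b * gg b v)"
    by (subst (1) u) (simp add: linear_sum[OF lin1] linear_scale[OF lin1])
  also have "\<dots> = (\<Sum>b\<in>B. (gg v b)\<^sup>2)"
  proof (rule sum.cong[OF refl])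
    fix b assume "b \<in> B"
    then have "gg v b = u b" using coef[of b u] u by simp
    then show "u b * gg b v = (gg v b)\<^sup>2" using gs[of b v] by (simp add: power2_eq_square)
  qed
  also have "\<dots> = (\<Sum>k\<in>I. (gg v (f k))\<^sup>2)"
    unfolding B_def by (rule sum.reindex[OF inj, unfolded o_def])
  finally show ?thesis .
qed


lemma cre_add: "cre (z + w) = cre z + cre w" by (simp add: cre_def vec_eq_iff)
lemma cim_add: "cim (z + w) = cim z + cim w" by (simp add: cim_def vec_eq_iff)
lemma cre_smult: "cre (c *s z) = Re c *\<^sub>R cre z - Im c *\<^sub>R cim z" by (simp add: cre_def cim_def vec_eq_iff)
lemma cim_smult: "cim (c *s z) = Re c *\<^sub>R cim z + Im c *\<^sub>R cre z" by (simp add: cre_def cim_def vec_eq_iff)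
lemma cre_zero: "cre 0 = 0" by (simp add: cre_def vec_eq_iff)
lemma cim_zero: "cim 0 = 0" by (simp add: cim_def vec_eq_iff)
lemma cre_cconj: "cre (cconj z) = cre z" by (simp add: cre_def cconj_def vec_eq_iff)
lemma cim_cconj: "cim (cconj z) = - cim z" by (simp add: cim_def cconj_def vec_eq_iff)

lemma cform2_add:
  assumes "bilinear b"
  shows "cform2 b (z1 + z2) w = cform2 b z1 w + cform2 b z2 w"
  unfolding cform2_def cre_add cim_add
  by (simp add: bilinear_ladd[OF assms] complex_eq_iff)

lemma cform2_smult:
  assumes "bilinear b"
  shows "cform2 b (c *s z) w = c * cform2 b z w"
  unfolding cform2_def cre_smult cim_smult
  by (simp add: bilinear_ladd[OF assms] bilinear_lsub[OF assms] bilinear_lmul[OF assms] complex_eq_iff algebra_simps)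

lemma cform2_zero:
  assumes "bilinear b"
  shows "cform2 b 0 w = 0"
  unfolding cform2_def cre_zero cim_zero
  by (simp add: bilinear_lzero[OF assms] complex_eq_iff)

lemma cform2_sum:
  assumes "bilinear b"
  shows "cform2 b (\<Sum>k\<in>K. f k) w = (\<Sum>k\<in>K. cform2 b (f k) w)"
proof (induction K rule: infinite_finite_induct)
  case (infinite A) then show ?case using cform2_zero[OF assms] by simp
next
  case empty then show ?case using cform2_zero[OF assms] by simp
next
  case (insert x F) then show ?case using cform2_add[OF assms] by simp
qed

lemma cform2_cpl:
  "cform2 b (cpl a1 b1) (cpl a2 b2) = Complex (b a1 a2 - b b1 b2) (b a1 b2 + b b1 a2)"
  unfolding cform2_def by simp

lemma cext2_cpl:
  "cext2 B (cpl a1 b1) (cpl a2 b2) = cpl (B a1 a2 - B b1 b2) (B a1 b2 + B b1 a2)"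
  unfolding cext2_def by simp

lemma cform4_reduce:
  fixes F :: "real^'m \<Rightarrow> real^'m \<Rightarrow> real^'m \<Rightarrow> real^'m \<Rightarrow> real"
  assumes s1: "\<And>c a b d e. F (c *\<^sub>R a) b d e = c * F a b d e"
    and s2: "\<And>c a b d e. F a (c *\<^sub>R b) d e = c * F a b d e"
    and s3: "\<And>c a b d e. F a b (c *\<^sub>R d) e = c * F a b d e"
    and s4: "\<And>c a b d e. F a b d (c *\<^sub>R e) = c * F a b d e"
    and k1: "\<And>c d. F X X c d = 0" "\<And>c d. F Y Y c d = 0" "\<And>c d. F Y X c d = - F X Y c d"
    and k2: "\<And>a b. F a b X X = 0" "\<And>a b. F a b Y Y = 0" "\<And>a b. F a b Y X = - F a b X Y"
  shows "cform4 F (cpl (s *\<^sub>R X) (- (s *\<^sub>R Y))) (cconj (cpl (s *\<^sub>R X) (- (s *\<^sub>R Y))))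
      (cpl (s *\<^sub>R X) (- (s *\<^sub>R Y))) (cconj (cpl (s *\<^sub>R X) (- (s *\<^sub>R Y))))
    = complex_of_real (4 * s^4 * F X Y Y X)"
proof -
  have n1: "F (- a) b d e = - F a b d e" for a b d e using s1[where c="-1"] by simp
  have n2: "F a (- b) d e = - F a b d e" for a b d e using s2[where c="-1"] by simp
  have n3: "F a b (- d) e = - F a b d e" for a b d e using s3[where c="-1"] by simp
  have n4: "F a b d (- e) = - F a b d e" for a b d e using s4[where c="-1"] by simp
  show ?thesis
    unfolding cform4_def
    by (simp add: UNIV_bool cpart_def s1 s2 s3 s4 n1 n2 n3 n4 k1 k2 complex_eq_iff algebra_simps power4_eq_xxxx)
qed


context AH begin

lemma curv4_scale:
  assumes q: "p \<in> U" and bil: "\<forall>q\<in>U. bilinear (\<Gamma> q)" and dif: "\<And>a b. (\<lambda>q. \<Gamma> q a b) differentiable (at p)"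
  shows "curv4_at g \<Gamma> p (c *\<^sub>R x) y z w = c * curv4_at g \<Gamma> p x y z w"
    "curv4_at g \<Gamma> p x (c *\<^sub>R y) z w = c * curv4_at g \<Gamma> p x y z w"
    "curv4_at g \<Gamma> p x y (c *\<^sub>R z) w = c * curv4_at g \<Gamma> p x y z w"
    "curv4_at g \<Gamma> p x y z (c *\<^sub>R w) = c * curv4_at g \<Gamma> p x y z w"
proof -
  have bp: "bilinear (\<Gamma> p)" using bil q by blast
  have gb: "bilinear (g p)" using gbil[OF q] .
  have da: "fd (\<lambda>q. \<Gamma> q (c *\<^sub>R a) b) p h = c *\<^sub>R fd (\<lambda>q. \<Gamma> q a b) p h" for a b h c
    unfolding frechet_bil_const[OF openU q bil dif, of "c *\<^sub>R a" b h] frechet_bil_const[OF openU q bil dif, of a b h]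
    by (simp add: scaleR_sum_right mult.assoc)
  have db: "fd (\<lambda>q. \<Gamma> q a (c *\<^sub>R b)) p h = c *\<^sub>R fd (\<lambda>q. \<Gamma> q a b) p h" for a b h c
    unfolding frechet_bil_const[OF openU q bil dif, of a "c *\<^sub>R b" h] frechet_bil_const[OF openU q bil dif, of a b h]
    by (simp add: scaleR_sum_right mult.assoc mult.left_commute)
  have dh: "fd (\<lambda>q. \<Gamma> q a b) p (c *\<^sub>R h) = c *\<^sub>R fd (\<lambda>q. \<Gamma> q a b) p h" for a b h c
    using linear_scale[OF linear_frechet_derivative[OF dif]] by blast
  note N = da db dh bilinear_lmul[OF bp] bilinear_rmul[OF bp] bilinear_lmul[OF gb] bilinear_rmul[OF gb]
    scaleR_right_diff_distrib[symmetric] scaleR_add_right[symmetric]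
  show "curv4_at g \<Gamma> p (c *\<^sub>R x) y z w = c * curv4_at g \<Gamma> p x y z w"
    unfolding curv4_formula[where \<Gamma>=\<Gamma> and p=p, OF bp] by (simp add: N)
  show "curv4_at g \<Gamma> p x (c *\<^sub>R y) z w = c * curv4_at g \<Gamma> p x y z w"
    unfolding curv4_formula[where \<Gamma>=\<Gamma> and p=p, OF bp] by (simp add: N)
  show "curv4_at g \<Gamma> p x y (c *\<^sub>R z) w = c * curv4_at g \<Gamma> p x y z w"
    unfolding curv4_formula[where \<Gamma>=\<Gamma> and p=p, OF bp] by (simp add: N)
  show "curv4_at g \<Gamma> p x y z (c *\<^sub>R w) = c * curv4_at g \<Gamma> p x y z w"
    unfolding curv4_formula[where \<Gamma>=\<Gamma> and p=p, OF bp] by (simp add: N)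
qed

lemma cform4_GD:
  assumes q: "p \<in> U"
  shows "cform4 (curv4_at g GD p) (cpl (s *\<^sub>R X) (- (s *\<^sub>R J p X))) (cconj (cpl (s *\<^sub>R X) (- (s *\<^sub>R J p X))))
      (cpl (s *\<^sub>R X) (- (s *\<^sub>R J p X))) (cconj (cpl (s *\<^sub>R X) (- (s *\<^sub>R J p X))))
    = complex_of_real (4 * s^4 * curv4_at g GD p X (J p X) (J p X) X)"
proof (rule cform4_reduce[where F="curv4_at g GD p" and X=X and Y="J p X" and s=s])
  have bil: "\<forall>q\<in>U. bilinear (GD q)" using GDbil by blast
  note S = curv4_scale[OF q bil GDdif[OF q]]
  show "\<And>c a b d e. curv4_at g GD p (c *\<^sub>R a) b d e = c * curv4_at g GD p a b d e" by (rule S(1))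
  show "\<And>c a b d e. curv4_at g GD p a (c *\<^sub>R b) d e = c * curv4_at g GD p a b d e" by (rule S(2))
  show "\<And>c a b d e. curv4_at g GD p a b (c *\<^sub>R d) e = c * curv4_at g GD p a b d e" by (rule S(3))
  show "\<And>c a b d e. curv4_at g GD p a b d (c *\<^sub>R e) = c * curv4_at g GD p a b d e" by (rule S(4))
  have bp: "bilinear (GD p)" using GDbil[OF q] .
  have gb: "bilinear (g p)" using gbil[OF q] .
  have sk1: "curv4_at g GD p b a c d = - curv4_at g GD p a b c d" for a b c d
    unfolding curv4_formula[where \<Gamma>=GD and p=p, OF bp]
    apply (subst bilinear_lneg[OF gb, symmetric])
    apply (rule arg_cong[where f="\<lambda>v. g p v d"])
    apply (simp add: algebra_simps)
    done
  show "\<And>c d. curv4_at g GD p X X c d = 0"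
  proof -
    fix c d show "curv4_at g GD p X X c d = 0" using sk1[of X X c d] by linarith
  qed
  show "\<And>c d. curv4_at g GD p (J p X) (J p X) c d = 0"
  proof -
    fix c d show "curv4_at g GD p (J p X) (J p X) c d = 0" using sk1[of "J p X" "J p X" c d] by linarith
  qed
  show "\<And>c d. curv4_at g GD p (J p X) X c d = - curv4_at g GD p X (J p X) c d" by (rule sk1)
  have sk2: "curv4_at g GD p a b d c = - curv4_at g GD p a b c d" for a b c d
    using curv_skewD[OF q, of a b c d] by linarith
  show "\<And>a b. curv4_at g GD p a b X X = 0"
  proof -
    fix a b show "curv4_at g GD p a b X X = 0" using sk2[of a b X X] by linarith
  qed
  show "\<And>a b. curv4_at g GD p a b (J p X) (J p X) = 0"
  proof -
    fix a b show "curv4_at g GD p a b (J p X) (J p X) = 0" using sk2[of a b "J p X" "J p X"] by linarith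
  qed
  show "\<And>a b. curv4_at g GD p a b (J p X) X = - curv4_at g GD p a b X (J p X)" by (rule sk2)
qed

end


context AH begin

lemma alg_at: assumes q: "p \<in> U" shows "alg (g p) (J p) (GL p) (GD p)"
  unfolding alg_def
  using gbil[OF q] gsym[OF q] Jlin[OF q] JJ[OF q] gJ[OF q] GLbil[OF q] lc_sym_at[OF lc q] GDbil[OF q] torsD[OF q]
    metric_at[OF metD q] metric_at[OF metL q]
  by metis

lemma RD_RL:
  assumes q: "p \<in> U"
  shows "curv4_at g GD p X (J p X) (J p X) X - curv4_at g GL p X (J p X) (J p X) X
     = g p (GD p X X - GL p X X) (GD p (J p X) (J p X) - GL p (J p X) (J p X))
     - g p (GD p X (J p X) - GL p X (J p X)) (GD p X (J p X) - GL p X (J p X))"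
proof -
  interpret A: alg "g p" "J p" "GL p" "GD p" by (rule alg_at[OF q])
  have core: "g p (fd (\<lambda>q. GD q (J p X) (J p X)) p X + GD p X (GD p (J p X) (J p X))
          - fd (\<lambda>q. GD q X (J p X)) p (J p X) - GD p (J p X) (GD p X (J p X))) X
       - g p (fd (\<lambda>q. GL q (J p X) (J p X)) p X + GL p X (GL p (J p X) (J p X))
          - fd (\<lambda>q. GL q X (J p X)) p (J p X) - GL p (J p X) (GL p X (J p X))) X
       = g p (GD p X X - GL p X X) (GD p (J p X) (J p X) - GL p (J p X) (J p X))
       - g p (GD p X (J p X) - GL p X (J p X)) (GD p X (J p X) - GL p X (J p X))"
  proof (rule A.core[where dD="\<lambda>u a b. fd (\<lambda>q. GD q a b) p u" and dL="\<lambda>u a b. fd (\<lambda>q. GL q a b) p u"])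
    fix x y z w
    show "g p (GD p x (GD p y z)) w + g p (GD p y z) (GD p x w) + g p (fd (\<lambda>q. GD q y z) p x) w
         + g p (GD p x z) (GD p y w) + g p z (GD p x (GD p y w)) + g p z (fd (\<lambda>q. GD q y w) p x)
       = g p (GL p x (GL p y z)) w + g p (GL p y z) (GL p x w) + g p (fd (\<lambda>q. GL q y z) p x) w
         + g p (GL p x z) (GL p y w) + g p z (GL p x (GL p y w)) + g p z (fd (\<lambda>q. GL q y w) p x)"
      using second_gD[OF q, of z w y x] second_gL[OF q, of z w y x] by simp
  next
    fix u
    show "fd (\<lambda>q. GD q X (J p X)) p u + GD p X (J p (GD p u X) - GD p u (J p X))
         - (fd (\<lambda>q. GD q (J p X) X) p u + GD p (J p (GD p u X) - GD p u (J p X)) X) = 0"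
      using E1[OF q, of X u] chernJ_at[OF ch q, of X u] by simp
  next
    fix u a b
    show "fd (\<lambda>q. GL q a b) p u = fd (\<lambda>q. GL q b a) p u" by (rule dL_sym[OF q])
  qed
  show ?thesis
    unfolding curv4_formula[where \<Gamma>=GD and p=p, OF GDbil[OF q]] curv4_formula[where \<Gamma>=GL and p=p, OF GLbil[OF q]]
    using core .
qed

end


context AH begin

lemma sigma_part:
  fixes n :: nat and X :: "real^'m" and e :: "nat \<Rightarrow> complex^'m" and tc tcb :: "nat \<Rightarrow> nat \<Rightarrow> nat \<Rightarrow> complex"
  assumes q: "p \<in> U" and card: "CARD('m) = 2 * n"
    and e1: "e 1 = cpl ((1 / sqrt 2) *\<^sub>R X) (- ((1 / sqrt 2) *\<^sub>R J p X))"
    and is10: "\<forall>i\<in>{1..n}. is10 J p (e i)"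
    and orth: "\<forall>i\<in>{1..n}. \<forall>j\<in>{1..n}. cform2 (g p) (e i) (cconj (e j)) = (if i = j then 1 else 0)"
    and exp: "\<forall>i\<in>{1..n}. \<forall>j\<in>{1..n}. cext2 (tors_at GD p) (e i) (e j)
           = (\<Sum>k=1..n. tc i j k *s e k + tcb i j k *s cconj (e k))"
  shows "(\<Sum>i=2..n. (cmod (tc i 1 1 + tcb i 1 1))^2) = 2 * g p (GD p X X - GL p X X) (GD p X X - GL p X X)"
proof -
  interpret A: alg "g p" "J p" "GL p" "GD p" by (rule alg_at[OF q])
  define s :: real where "s = 1 / sqrt 2"
  define P where "P = GD p X X - GL p X X"
  define a where "a k = cre (e k)" for k
  define b where "b k = cim (e k)" for k
  have gb: "bilinear (g p)" by (rule gbil[OF q])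
  have Tb: "bilinear (tors_at GD p)"
    using GDbil[OF q] unfolding tors_at_eq bilinear_def linear_iff
    by (auto simp: bilinear_ladd bilinear_radd bilinear_lmul bilinear_rmul algebra_simps)
  have n1: "n \<ge> 1" using card by (metis mult_0_right nat_less_le not_less zero_less_card_finite One_nat_def less_one)
  have ecpl: "e k = cpl (a k) (b k)" for k unfolding a_def b_def by (rule cpl_cre_cim[symmetric])
  have Jab: "J p (a k) = - b k \<and> J p (b k) = a k" if "k \<in> {1..n}" for k
  proof -
    have "cext1 (J p) (e k) = \<i> *s e k" using is10 that unfolding is10_def by blast
    then show ?thesis unfolding cext1_def ecpl ii_cpl cpl_eq_iff by simp
  qed
  have bJ: "b k = - J p (a k)" if "k \<in> {1..n}" for k using Jab[OF that] by simp
  have or1: "g p (a k) (a l) = (if k = l then 1/2 else 0) \<and> g p (a k) (b l) = 0" if "k \<in> {1..n}" "l \<in> {1..n}" for k l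
  proof -
    have c: "cform2 (g p) (e k) (cconj (e l)) = (if k = l then 1 else 0)" using orth that by blast
    have bb: "g p (b k) (b l) = g p (a k) (a l)"
      unfolding bJ[OF that(1)] bJ[OF that(2)] using gJ[OF q] bilinear_lneg[OF gb] bilinear_rneg[OF gb] by simp
    have ba: "g p (b k) (a l) = - g p (a k) (b l)"
      unfolding bJ[OF that(1)] bJ[OF that(2)] using Jskew[OF q] bilinear_lneg[OF gb] bilinear_rneg[OF gb] by simp
    from c show ?thesis unfolding ecpl cconj_cpl cform2_cpl
      using bb ba bilinear_rneg[OF gb] by (auto simp: complex_eq_iff split: if_splits)
  qed
  have or2: "g p (b k) (b l) = (if k = l then 1/2 else 0) \<and> g p (b k) (a l) = 0" if "k \<in> {1..n}" "l \<in> {1..n}" for k l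
  proof -
    have bb: "g p (b k) (b l) = g p (a k) (a l)"
      unfolding bJ[OF that(1)] bJ[OF that(2)] using gJ[OF q] bilinear_lneg[OF gb] bilinear_rneg[OF gb] by simp
    have ba: "g p (b k) (a l) = g p (a l) (b k)" by (rule gsym[OF q])
    show ?thesis using bb ba or1[OF that] or1[OF that(2) that(1)] by simp
  qed
  define f where "f = (\<lambda>(k::nat, t::bool). if t then sqrt 2 *\<^sub>R b k else sqrt 2 *\<^sub>R a k)"
  define I where "I = {1..n} \<times> (UNIV :: bool set)"
  have finI: "finite I" unfolding I_def by simp
  have cI: "card I = CARD('m)" unfolding I_def card by (simp add: card_cartesian_product)
  have orthf: "g p (f x) (f y) = (if x = y then 1 else 0)" if "x \<in> I" "y \<in> I" for x y
  proof -
    have x: "x = (fst x, snd x)" "fst x \<in> {1..n}" using that(1) unfolding I_def by auto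
    have y: "y = (fst y, snd y)" "fst y \<in> {1..n}" using that(2) unfolding I_def by auto
    define k t l u where "k = fst x" "t = snd x" "l = fst y" "u = snd y"
    note x = x[folded k_t_l_u_def] and y = y[folded k_t_l_u_def]
    have s2: "sqrt 2 * sqrt 2 = (2::real)" by simp
    show ?thesis unfolding x y f_def
      using or1[OF x(2) y(2)] or2[OF x(2) y(2)] gsym[OF q, of "a k" "b l"] s2
      by (cases t; cases u) (auto simp: bilinear_lmul[OF gb] bilinear_rmul[OF gb])
  qed
  have pars: "g p P P = (\<Sum>x\<in>I. (g p P (f x))\<^sup>2)"
    by (rule parseval[OF gb _ finI cI orthf]) (use gsym[OF q] in auto)
  have pars2: "g p P P = 2 * (\<Sum>k=1..n. (g p P (a k))\<^sup>2 + (g p P (b k))\<^sup>2)"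
  proof -
    have "(\<Sum>x\<in>I. (g p P (f x))\<^sup>2) = (\<Sum>k=1..n. \<Sum>t\<in>(UNIV::bool set). (g p P (f (k, t)))\<^sup>2)"
      unfolding I_def by (simp add: sum.cartesian_product)
    also have "\<dots> = (\<Sum>k=1..n. 2 * ((g p P (a k))\<^sup>2 + (g p P (b k))\<^sup>2))"
      unfolding f_def by (simp add: UNIV_bool bilinear_rmul[OF gb] power_mult_distrib)
    finally show ?thesis using pars by (simp add: sum_distrib_left)
  qed
  define Y where "Y = J p X"
  define T where "T = tors_at GD p"
  have Teq: "T u v = GD p u v - GD p v u" for u v unfolding T_def by (rule tors_at_eq)
  have Tl: "T (- u) v = - T u v" "T u (- v) = - T u v" "T (c *\<^sub>R u) v = c *\<^sub>R T u v" "T u (c *\<^sub>R v) = c *\<^sub>R T u v"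
     "T (u + w) v = T u v + T w v" "T u (v + w) = T u v + T u w" for u v w c
    unfolding T_def using Tb by (auto simp: bilinear_lneg bilinear_rneg bilinear_lmul bilinear_rmul bilinear_ladd bilinear_radd)
  have f1: "g p (T u X) X = g p P u" for u
    using A.alpha[of X u] gsym[OF q, of "T u X" X] unfolding Teq P_def
    by (simp add: A.gl)
  have f2: "g p (T u Y) X = g p P (J p u)" for u
    using A.delta[of X u] gsym[OF q, of "T u Y" X] unfolding Teq P_def Y_def
    by (simp add: A.gl)
  have f3: "T (- J p u) Y = T u X" for u
  proof -
    have "T u X + T (J p u) (J p X) = 0" using torsD[OF q, of u X] unfolding Teq .
    then have "T (J p u) (J p X) = - T u X" by (simp add: add_eq_0_iff)
    then show ?thesis unfolding Tl Y_def by simp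
  qed
  have f4: "T (- J p u) X = - T u Y" for u
  proof -
    have "T (J p u) X + T (J p (J p u)) (J p X) = 0" using torsD[OF q, of "J p u" X] unfolding Teq .
    then have "T (J p u) X = T u Y" unfolding JJ[OF q] Tl Y_def by (simp add: eq_neg_iff_add_eq_0)
    then show ?thesis unfolding Tl by simp
  qed
  have s2: "2 * s * s = 1" unfolding s_def by (simp add: field_simps)
  have tcv: "tc k 1 1 + tcb k 1 1 = Complex (2 * g p P (a k)) (2 * g p P (b k))" if k: "k \<in> {1..n}" for k
  proof -
    define \<Phi> where "\<Phi> z = cform2 (g p) z (cconj (e 1)) + cform2 (g p) z (e 1)" for z
    have one: "(1::nat) \<in> {1..n}" using n1 by simp
    have H: "cext2 T (e k) (e 1) = (\<Sum>l=1..n. tc k 1 l *s e l + tcb k 1 l *s cconj (e l))"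
      using exp k one unfolding T_def by blast
    have \<Phi>lin: "\<Phi> (\<Sum>l=1..n. tc k 1 l *s e l + tcb k 1 l *s cconj (e l))
        = (\<Sum>l=1..n. tc k 1 l * \<Phi> (e l) + tcb k 1 l * \<Phi> (cconj (e l)))"
      unfolding \<Phi>_def cform2_sum[OF gb] cform2_add[OF gb] cform2_smult[OF gb]
      by (simp add: sum.distrib algebra_simps)
    have \<Phi>e: "\<Phi> (e l) = (if l = 1 then 1 else 0)" if l: "l \<in> {1..n}" for l
    proof -
      have c1: "cform2 (g p) (e l) (cconj (e 1)) = (if l = 1 then 1 else 0)" using orth l one by blast
      have c2: "cform2 (g p) (e l) (e 1) = 0"
        unfolding ecpl[of l] ecpl[of 1] cform2_cpl using or1[OF l one] or2[OF l one]
        by (simp add: complex_eq_iff)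
      show ?thesis unfolding \<Phi>_def c1 c2 by simp
    qed
    have \<Phi>ce: "\<Phi> (cconj (e l)) = (if l = 1 then 1 else 0)" if l: "l \<in> {1..n}" for l
    proof -
      show ?thesis unfolding \<Phi>_def ecpl[of l] ecpl[of 1] cconj_cpl cform2_cpl
        using or1[OF l one] or2[OF l one]
        by (simp add: complex_eq_iff bilinear_lneg[OF gb] bilinear_rneg[OF gb])
    qed
    have R: "\<Phi> (cext2 T (e k) (e 1)) = tc k 1 1 + tcb k 1 1"
    proof -
      have "(\<Sum>l=1..n. tc k 1 l * \<Phi> (e l) + tcb k 1 l * \<Phi> (cconj (e l)))
          = (\<Sum>l=1..n. if l = 1 then tc k 1 1 + tcb k 1 1 else 0)"
      proof (rule sum.cong[OF refl])
        fix l assume "l \<in> {1..n}"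
        then show "tc k 1 l * \<Phi> (e l) + tcb k 1 l * \<Phi> (cconj (e l)) = (if l = 1 then tc k 1 1 + tcb k 1 1 else 0)"
          using \<Phi>e[of l] \<Phi>ce[of l] by auto
      qed
      also have "\<dots> = tc k 1 1 + tcb k 1 1" using one by (subst sum.delta[OF finite_atLeastAtMost]) simp
      finally show ?thesis unfolding H \<Phi>lin .
    qed
    have L: "\<Phi> (cext2 T (e k) (e 1)) = Complex (2 * g p P (a k)) (2 * g p P (b k))"
    proof -
      have e1': "e 1 = cpl (s *\<^sub>R X) (- (s *\<^sub>R Y))" using e1 unfolding s_def Y_def .
      have bk: "b k = - J p (a k)" by (rule bJ[OF k])
      have "\<Phi> (cext2 T (e k) (e 1)) = Complex (2 * s * s * (g p (T (a k) X) X + g p (T (b k) Y) X))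
          (2 * s * s * (g p (T (b k) X) X - g p (T (a k) Y) X))"
        unfolding \<Phi>_def ecpl[of k] e1' cext2_cpl cconj_cpl cform2_cpl
        by (simp add: Tl bilinear_lneg[OF gb] bilinear_rneg[OF gb] bilinear_lmul[OF gb] bilinear_rmul[OF gb]
            bilinear_ladd[OF gb] bilinear_lsub[OF gb] complex_eq_iff algebra_simps)
      also have "\<dots> = Complex (2 * g p P (a k)) (2 * g p P (b k))"
        unfolding s2 bk f3 f4 f1 f2 using bJ[OF k] Jab[OF k]
        by (simp add: bilinear_rneg[OF gb] bilinear_lneg[OF gb] f2)
      finally show ?thesis .
    qed
    show ?thesis using L R by simp
  qed
  have cm: "(cmod (tc k 1 1 + tcb k 1 1))\<^sup>2 = 4 * ((g p P (a k))\<^sup>2 + (g p P (b k))\<^sup>2)" if k: "k \<in> {1..n}" for k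
    unfolding tcv[OF k] cmod_power2 by (simp add: power_mult_distrib)
  have gPX: "g p P X = 0" using A.selfA[of X X] unfolding P_def by (simp add: A.gl)
  have gPY: "g p P Y = 0"
  proof -
    have m: "g p (GD p X X) Y + g p X (GD p X Y) = g p (GL p X X) Y + g p X (GL p X Y)" by (rule A.mc)
    have t: "GD p X Y = GD p Y X" unfolding Y_def by (rule A.TJ)
    have sa: "g p (GD p Y X) X = g p (GL p Y X) X" by (rule A.selfA)
    have gs1: "GL p X Y = GL p Y X" by (rule A.Gs)
    show ?thesis using m t sa gs1 gsym[OF q, of X "GD p Y X"] gsym[OF q, of X "GL p Y X"]
      unfolding P_def by (simp add: A.gl)
  qed
  have a1: "a 1 = s *\<^sub>R X" unfolding a_def e1 s_def by simp
  have b1: "b 1 = - (s *\<^sub>R Y)" unfolding b_def e1 s_def Y_def by simp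
  have first: "(cmod (tc 1 1 1 + tcb 1 1 1))\<^sup>2 = 0"
    using cm[of 1] n1 unfolding a1 b1 by (simp add: bilinear_rmul[OF gb] bilinear_rneg[OF gb] gPX gPY)
  have "(\<Sum>i=1..n. (cmod (tc i 1 1 + tcb i 1 1))^2) = (\<Sum>i=1..n. 4 * ((g p P (a i))\<^sup>2 + (g p P (b i))\<^sup>2))"
    by (rule sum.cong[OF refl]) (rule cm)
  also have "\<dots> = 4 * (\<Sum>i=1..n. (g p P (a i))\<^sup>2 + (g p P (b i))\<^sup>2)"
    by (rule sum_distrib_left[symmetric])
  also have "\<dots> = 2 * g p P P" using pars2 by simp
  finally have all: "(\<Sum>i=1..n. (cmod (tc i 1 1 + tcb i 1 1))^2) = 2 * g p P P" .
  have "(\<Sum>i=1..n. (cmod (tc i 1 1 + tcb i 1 1))^2) = (cmod (tc 1 1 1 + tcb 1 1 1))\<^sup>2 + (\<Sum>i=2..n. (cmod (tc i 1 1 + tcb i 1 1))^2)"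
    using sum.atLeast_Suc_atMost[OF n1, of "\<lambda>i. (cmod (tc i 1 1 + tcb i 1 1))^2"] by (simp add: numeral_2_eq_2)
  then show ?thesis using all first unfolding P_def by simp
qed

end


theorem lemma2p3:
  fixes U :: "(real^'m) set"
    and J :: "real^'m \<Rightarrow> real^'m \<Rightarrow> real^'m"
    and g :: "real^'m \<Rightarrow> real^'m \<Rightarrow> real^'m \<Rightarrow> real"
    and \<Gamma>L \<Gamma>D :: "real^'m \<Rightarrow> real^'m \<Rightarrow> real^'m \<Rightarrow> real^'m"
    and n :: nat and p X :: "real^'m"
    and e :: "nat \<Rightarrow> complex^'m"
    and tc tcb :: "nat \<Rightarrow> nat \<Rightarrow> nat \<Rightarrow> complex"
  assumes "CARD('m) = 2 * n"
    and "almost_hermitian U J g"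
    and "levi_civita U g \<Gamma>L"
    and "chern_connection U J g \<Gamma>D"
    and "p \<in> U"
    and "g p X X = 1"
    and "e 1 = cpl ((1 / sqrt 2) *\<^sub>R X) (- ((1 / sqrt 2) *\<^sub>R J p X))"
    and "\<forall>i\<in>{1..n}. is10 J p (e i)"
    and "\<forall>i\<in>{1..n}. \<forall>j\<in>{1..n}. cform2 (g p) (e i) (cconj (e j)) = (if i = j then 1 else 0)"
    and "\<forall>i\<in>{1..n}. \<forall>j\<in>{1..n}. cext2 (tors_at \<Gamma>D p) (e i) (e j)
           = (\<Sum>k=1..n. tc i j k *s e k + tcb i j k *s cconj (e k))"
  shows "cform4 (curv4_at g \<Gamma>D p) (e 1) (cconj (e 1)) (e 1) (cconj (e 1))
           - complex_of_real (\<Sum>i=2..n. (cmod (tc i 1 1 + tcb i 1 1))^2)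
         = complex_of_real (curv4_at g \<Gamma>L p X (J p X) (J p X) X
             - (let v = cov \<Gamma>L (\<lambda>_. X) (\<lambda>q. J q X) p - J p (cov \<Gamma>L (\<lambda>_. X) (\<lambda>_. X) p)
                in g p v v))"
proof -
  interpret AH U J g \<Gamma>L \<Gamma>D by (rule AH.intro) (rule assms(2), rule assms(3), rule assms(4))
  have q: "p \<in> U" by (rule assms(5))
  interpret A: alg "g p" "J p" "\<Gamma>L p" "\<Gamma>D p" by (rule alg_at[OF q])
  define P where "P = \<Gamma>D p X X - \<Gamma>L p X X"
  define Q where "Q = \<Gamma>D p (J p X) (J p X) - \<Gamma>L p (J p X) (J p X)"
  define R where "R = \<Gamma>D p X (J p X) - \<Gamma>L p X (J p X)"
  define RD where "RD = curv4_at g \<Gamma>D p X (J p X) (J p X) X"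
  define RL where "RL = curv4_at g \<Gamma>L p X (J p X) (J p X) X"
  have h4: "(sqrt 2::real) ^ 4 = 4"
  proof -
    have "(sqrt 2::real) ^ 4 = sqrt (2 ^ 4)" by (rule real_sqrt_power[symmetric])
    also have "\<dots> = sqrt (4 ^ 2)" by simp
    also have "\<dots> = 4" by (simp only: real_sqrt_abs abs_numeral)
    finally show ?thesis .
  qed
  have s4: "4 * (1 / sqrt 2) ^ 4 = (1::real)" by (simp add: power_divide h4)
  have cf: "cform4 (curv4_at g \<Gamma>D p) (e 1) (cconj (e 1)) (e 1) (cconj (e 1)) = complex_of_real RD"
    unfolding assms(7) cform4_GD[OF q] s4 RD_def by simp
  have sig: "(\<Sum>i=2..n. (cmod (tc i 1 1 + tcb i 1 1))^2) = 2 * g p P P"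
    unfolding P_def by (rule sigma_part[OF q assms(1) assms(7) assms(8) assms(9) assms(10)])
  have rr: "RD - RL = g p P Q - g p R R"
    unfolding RD_def RL_def P_def Q_def R_def by (rule RD_RL[OF q])
  have vv: "cov \<Gamma>L (\<lambda>_. X) (\<lambda>q. J q X) p - J p (cov \<Gamma>L (\<lambda>_. X) (\<lambda>_. X) p) = J p P - R"
    unfolding cov_def P_def R_def chernJ_at[OF ch q]
    by (simp add: A.Jlin)
  have k: "g p P P - g p Q P = 2 * g p (J p R) P"
    using A.key[of X P] unfolding P_def Q_def R_def .
  have k2: "g p (J p R) P = - g p R (J p P)" by (rule A.Jsk)
  have gv: "g p (J p P - R) (J p P - R) = g p P P - 2 * g p R (J p P) + g p R R"
    by (simp add: A.gl A.gJ A.gs[of "J p P" R])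
  have sym1: "g p Q P = g p P Q" by (rule A.gs)
  have fin: "RD - 2 * g p P P = RL - g p (J p P - R) (J p P - R)"
    using rr k k2 gv sym1 by simp
  have fc: "complex_of_real (RL - g p (J p P - R) (J p P - R)) = complex_of_real RD - complex_of_real (2 * g p P P)"
    unfolding fin[symmetric] by (rule of_real_diff)
  show ?thesis
    unfolding cf sig Let_def vv RL_def[symmetric] fc ..
qed


end
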